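(* Let $\{X_t\}_{t\in\mathbb Z}$ be i.i.d. real-valued random variables with distribution function $F$ which is twice differentiable with density $f=F'$ satisfying $$\sup_{x\in\mathbb R}\big(f(x)+|f'(x)|\big)<\infty\quad\text{and}\quad \mathbb P(|X_1|>x)\le Cx^{-\lambda}\ \text{for all } x>0$$ for some constant $C>0$ and fixed $\lambda>18/5$. Let $\beta\in(0,1)$ be fixed and assume $f(q_\beta)>0$, where $q_\beta=F^-(\beta)$. Then, as $n\to\infty$, $$\frac1{\sqrt n}\max_{1\le i<j\le n}(j-i+1)\Big|[\hat q_\beta]_i^j-q_\beta-\frac{\beta-\hat F_i^j(q_\beta)}{f(q_\beta)}\Big|=o_{\mathbb P}(1).$$
   Context: For a distribution function $G$, $G^-(\beta)=\inf\{x\in\mathbb R: G(x)\ge\beta\}$. $\hat F_i^j(z)=\frac1{j-i+1}\sum_{t=i}^jI\{X_t\le z\}$ is the empirical distribution function of $X_i,\dots,X_j$ and $[\hat q_\beta]_i^j=(\hat F_i^j)^-(\beta)$ the corresponding empirical $\beta$-quantile. *)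

theory Defs
  imports "HOL-Probability.Probability"
begin

definition gen_inv :: "(real \<Rightarrow> real) \<Rightarrow> real \<Rightarrow> real" where
  "gen_inv G \<beta> = Inf {x. G x \<ge> \<beta>}"

definition emp_cdf :: "(nat \<Rightarrow> 'a \<Rightarrow> real) \<Rightarrow> nat \<Rightarrow> nat \<Rightarrow> 'a \<Rightarrow> real \<Rightarrow> real" where
  "emp_cdf X i j \<omega> z =
     (\<Sum>t=i..j. (if X t \<omega> \<le> z then 1 else 0)) / real (j - i + 1)"

definition emp_quantile :: "(nat \<Rightarrow> 'a \<Rightarrow> real) \<Rightarrow> real \<Rightarrow> nat \<Rightarrow> nat \<Rightarrow> 'a \<Rightarrow> real" where
  "emp_quantile X \<beta> i j \<omega> = gen_inv (emp_cdf X i j \<omega>) \<beta>"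

definition bahadur_stat ::
  "(nat \<Rightarrow> 'a \<Rightarrow> real) \<Rightarrow> real \<Rightarrow> real \<Rightarrow> real \<Rightarrow> nat \<Rightarrow> 'a \<Rightarrow> real" where
  "bahadur_stat X \<beta> q fq n \<omega> =
     (1 / sqrt (real n)) *
     Max {real (j - i + 1) *
            \<bar>emp_quantile X \<beta> i j \<omega> - q - (\<beta> - emp_cdf X i j \<omega> q) / fq\<bar>
          | i j. 1 \<le> i \<and> i < j \<and> j \<le> n}"

end

theory Submission
  imports Defs "HOL-Real_Asymp.Real_Asymp"
begin

lemma exp_le_quad: fixes s :: real assumes "\<bar>s\<bar> \<le> 1" shows "exp s \<le> 1 + s + s\<^sup>2"
proof (cases "s \<ge> 0")
  case True thus ?thesis using exp_bound[of s] assms by auto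
next
  case False
  define u where "u = -s"
  have u: "0 < u" "u \<le> 1" using False assms by (auto simp: u_def)
  have "exp u \<ge> 1 + u" by (rule exp_ge_add_one_self)
  have "exp (-u) = 1 / exp u" by (simp add: exp_minus field_simps)
  also have "\<dots> \<le> 1 / (1 + u)" using u \<open>exp u \<ge> 1 + u\<close> by (intro divide_left_mono) auto
  also have "\<dots> \<le> 1 - u + u\<^sup>2"
  proof -
    have "(1 + u) * (1 - u + u\<^sup>2) = 1 + u^3" by (simp add: algebra_simps power2_eq_square power3_eq_cube)
    hence "1 \<le> (1 + u) * (1 - u + u\<^sup>2)" using u by simp
    thus ?thesis using u by (simp add: field_simps)
  qed
  finally show ?thesis by (simp add: u_def)
qed

lemma mgf_bern: fixes s p :: real assumes "\<bar>s\<bar> \<le> 1" "0 \<le> p"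
  shows "exp (-s*p) * (1 + p * (exp s - 1)) \<le> exp (p * s\<^sup>2)"
proof -
  have "1 + p * (exp s - 1) \<le> exp (p * (exp s - 1))" by (rule exp_ge_add_one_self)
  hence "exp (-s*p) * (1 + p * (exp s - 1)) \<le> exp (-s*p) * exp (p * (exp s - 1))" by simp
  also have "\<dots> = exp (p * (exp s - 1 - s))" by (simp add: mult_exp_exp algebra_simps)
  also have "\<dots> \<le> exp (p * s\<^sup>2)" using exp_le_quad[OF assms(1)] assms(2)
    by (intro exp_mono mult_left_mono) auto
  finally show ?thesis .
qed

context prob_space begin


lemma chernoff_mgf:
  fixes X :: "nat \<Rightarrow> 'a \<Rightarrow> real"
  assumes indep: "indep_vars (\<lambda>_. borel) X UNIV" and A: "A \<in> sets borel"
    and p: "\<And>t. prob {\<omega>\<in>space M. X t \<omega> \<in> A} = p"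
    and fin: "finite I" and s: "\<bar>s\<bar> \<le> 1"
  shows "(\<integral>\<^sup>+\<omega>. ennreal (exp (s * ((\<Sum>t\<in>I. indicator A (X t \<omega>)) - real (card I) * p))) \<partial>M)
         \<le> ennreal (exp (real (card I) * p * s\<^sup>2))"
proof -
  have rv: "random_variable borel (X t)" for t using indep unfolding indep_vars_def by blast
  have p0: "0 \<le> p" using p[of 0] by auto
  have E: "(\<integral>\<^sup>+\<omega>. ennreal (exp (s * (indicator A (X t \<omega>) - p))) \<partial>M) = ennreal (exp (-s*p) * (1 + p * (exp s - 1)))" for t
  proof -
    have eq: "exp (s * (indicator A (X t \<omega>) - p)) = exp (-s*p) + (exp (-s*p) * (exp s - 1)) * indicator {\<omega>\<in>space M. X t \<omega> \<in> A} \<omega>"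
      if "\<omega> \<in> space M" for \<omega>
      using that by (auto simp: indicator_def algebra_simps mult_exp_exp)
    have m: "{\<omega>\<in>space M. X t \<omega> \<in> A} \<in> events" using rv[of t] A by measurable
    have "(\<integral>\<^sup>+\<omega>. ennreal (exp (s * (indicator A (X t \<omega>) - p))) \<partial>M)
       = (\<integral>\<^sup>+\<omega>. ennreal (exp (-s*p) + (exp (-s*p) * (exp s - 1)) * indicator {\<omega>\<in>space M. X t \<omega> \<in> A} \<omega>) \<partial>M)"
      by (intro nn_integral_cong) (simp add: eq)
    also have "\<dots> = ennreal (expectation (\<lambda>\<omega>. exp (-s*p) + (exp (-s*p) * (exp s - 1)) * indicator {\<omega>\<in>space M. X t \<omega> \<in> A} \<omega>))"
    proof (rule nn_integral_eq_integral)
      show "integrable M (\<lambda>\<omega>. exp (-s*p) + (exp (-s*p) * (exp s - 1)) * indicator {\<omega>\<in>space M. X t \<omega> \<in> A} \<omega>)"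
        using m by (intro Bochner_Integration.integrable_add integrable_mult_right integrable_const) (auto simp: emeasure_eq_measure)
      show "AE x in M. 0 \<le> exp (- s * p) + exp (- s * p) * (exp s - 1) * indicator {\<omega> \<in> space M. X t \<omega> \<in> A} x"
      proof (rule AE_I2)
        fix x
        have "exp (-s*p) + exp (-s*p) * (exp s - 1) * indicator {\<omega> \<in> space M. X t \<omega> \<in> A} x
           = exp (-s*p) * (1 + (exp s - 1) * indicator {\<omega> \<in> space M. X t \<omega> \<in> A} x)" by (simp add: algebra_simps)
        moreover have "0 \<le> 1 + (exp s - 1) * indicator {\<omega> \<in> space M. X t \<omega> \<in> A} x"
          by (auto simp: indicator_def)
        ultimately show "0 \<le> exp (-s*p) + exp (-s*p) * (exp s - 1) * indicator {\<omega> \<in> space M. X t \<omega> \<in> A} x" by simp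
      qed
    qed
    also have "expectation (\<lambda>\<omega>. exp (-s*p) + (exp (-s*p) * (exp s - 1)) * indicator {\<omega>\<in>space M. X t \<omega> \<in> A} \<omega>)
        = exp (-s*p) + (exp (-s*p) * (exp s - 1)) * p"
      using m p[of t] by (simp add: Bochner_Integration.integral_add integral_indicator emeasure_eq_measure prob_space)
    also have "\<dots> = exp (-s*p) * (1 + p * (exp s - 1))" by (simp add: algebra_simps)
    finally show ?thesis .
  qed
  have "(\<integral>\<^sup>+\<omega>. ennreal (exp (s * ((\<Sum>t\<in>I. indicator A (X t \<omega>)) - real (card I) * p))) \<partial>M)
      = (\<integral>\<^sup>+\<omega>. (\<Prod>t\<in>I. ennreal (exp (s * (indicator A (X t \<omega>) - p)))) \<partial>M)"
  proof (intro nn_integral_cong)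
    fix \<omega>
    have "s * ((\<Sum>t\<in>I. indicator A (X t \<omega>)) - real (card I) * p) = (\<Sum>t\<in>I. s * (indicator A (X t \<omega>) - p))"
      by (simp only: sum_distrib_left[symmetric] sum_subtractf sum_constant)
    hence "exp (s * ((\<Sum>t\<in>I. indicator A (X t \<omega>)) - real (card I) * p)) = (\<Prod>t\<in>I. exp (s * (indicator A (X t \<omega>) - p)))"
      by (simp add: exp_sum fin)
    thus "ennreal (exp (s * ((\<Sum>t\<in>I. indicator A (X t \<omega>)) - real (card I) * p))) = (\<Prod>t\<in>I. ennreal (exp (s * (indicator A (X t \<omega>) - p))))"
      by (simp add: prod_ennreal)
  qed
  also have "\<dots> = (\<Prod>t\<in>I. \<integral>\<^sup>+\<omega>. ennreal (exp (s * (indicator A (X t \<omega>) - p))) \<partial>M)"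
    by (intro indep_vars_nn_integral fin indep_vars_compose2[OF indep_vars_subset[OF indep]]) (use A in auto)
  also have "\<dots> \<le> (\<Prod>t\<in>I. ennreal (exp (p * s\<^sup>2)))"
    using mgf_bern[OF s p0] by (intro prod_mono_ennreal) (simp add: E)
  also have "\<dots> = ennreal (exp (real (card I) * p * s\<^sup>2))"
  proof -
    have "(\<Prod>t\<in>I. ennreal (exp (p * s\<^sup>2))) = ennreal (exp (p * s\<^sup>2) ^ card I)"
      by (simp add: ennreal_power)
    also have "exp (p * s\<^sup>2) ^ card I = exp (real (card I) * p * s\<^sup>2)"
      by (simp add: exp_of_nat_mult[symmetric] mult_ac)
    finally show ?thesis .
  qed
  finally show ?thesis .
qed

lemma chernoff_tail_gen:
  fixes Z :: "'a \<Rightarrow> real"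
  assumes Zm: "Z \<in> borel_measurable M" and s: "0 < s"
    and mgf: "(\<integral>\<^sup>+\<omega>. ennreal (exp (s * Z \<omega>)) \<partial>M) \<le> ennreal K"
  shows "prob {\<omega>\<in>space M. c \<le> Z \<omega>} \<le> exp (- s * c) * K"
proof -
  have "emeasure M {\<omega>\<in>space M. c \<le> Z \<omega>} \<le> ennreal (exp (-s*c)) * (\<integral>\<^sup>+\<omega>. ennreal (exp (s * Z \<omega>)) * indicator (space M) \<omega> \<partial>M)"
    by (rule Chernoff_ineq_nn_integral_ge[OF s]) (use Zm in auto)
  also have "(\<integral>\<^sup>+\<omega>. ennreal (exp (s * Z \<omega>)) * indicator (space M) \<omega> \<partial>M) = (\<integral>\<^sup>+\<omega>. ennreal (exp (s * Z \<omega>)) \<partial>M)"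
    by (intro nn_integral_cong) auto
  also have "ennreal (exp (-s*c)) * \<dots> \<le> ennreal (exp (-s*c)) * ennreal K"
    by (intro mult_left_mono mgf) auto
  finally have "emeasure M {\<omega>\<in>space M. c \<le> Z \<omega>} \<le> ennreal (exp (-s*c)) * ennreal K" .
  moreover have "0 \<le> K"
  proof (rule ccontr)
    assume "\<not> 0 \<le> K" hence "ennreal K = 0" by (simp add: ennreal_eq_0_iff)
    with mgf have "(\<integral>\<^sup>+\<omega>. ennreal (exp (s * Z \<omega>)) \<partial>M) = 0" by simp
    moreover have "(\<integral>\<^sup>+\<omega>. ennreal (exp (s * Z \<omega>)) \<partial>M) \<ge> (\<integral>\<^sup>+\<omega>. 0 \<partial>M)" by simp
    moreover have "(\<integral>\<^sup>+\<omega>. ennreal (exp (s * Z \<omega>)) \<partial>M) > 0"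
    proof -
      have "(\<integral>\<^sup>+\<omega>. ennreal (exp (s * Z \<omega>)) \<partial>M) = 0 \<longleftrightarrow> (AE \<omega> in M. ennreal (exp (s * Z \<omega>)) = 0)"
        by (rule nn_integral_0_iff_AE) (use Zm in auto)
      moreover have "\<not> (AE \<omega> in M. ennreal (exp (s * Z \<omega>)) = 0)" by (simp add: AE_False)
      ultimately show ?thesis by (simp add: zero_less_iff_neq_zero)
    qed
    ultimately show False by simp
  qed
  ultimately show ?thesis
    by (simp add: emeasure_eq_measure ennreal_mult'[symmetric] ennreal_le_iff)
qed

lemma chernoff_upper:
  fixes X :: "nat \<Rightarrow> 'a \<Rightarrow> real"
  assumes indep: "indep_vars (\<lambda>_. borel) X UNIV" and A: "A \<in> sets borel"
    and p: "\<And>t. prob {\<omega>\<in>space M. X t \<omega> \<in> A} = p"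
    and fin: "finite I" and s: "0 < s" "s \<le> 1"
  shows "prob {\<omega>\<in>space M. c \<le> (\<Sum>t\<in>I. indicator A (X t \<omega>)) - real (card I) * p}
         \<le> exp (real (card I) * p * s\<^sup>2 - s * c)"
proof -
  have rv: "random_variable borel (X t)" for t using indep unfolding indep_vars_def by blast
  have "prob {\<omega>\<in>space M. c \<le> (\<Sum>t\<in>I. indicator A (X t \<omega>)) - real (card I) * p} \<le> exp (- s * c) * exp (real (card I) * p * s\<^sup>2)"
    by (rule chernoff_tail_gen[OF _ s(1) chernoff_mgf[OF indep A p fin]]) (use s A rv in auto)
  thus ?thesis by (simp add: mult_exp_exp algebra_simps)
qed

lemma chernoff_lower:
  fixes X :: "nat \<Rightarrow> 'a \<Rightarrow> real"
  assumes indep: "indep_vars (\<lambda>_. borel) X UNIV" and A: "A \<in> sets borel"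
    and p: "\<And>t. prob {\<omega>\<in>space M. X t \<omega> \<in> A} = p"
    and fin: "finite I" and s: "0 < s" "s \<le> 1"
  shows "prob {\<omega>\<in>space M. (\<Sum>t\<in>I. indicator A (X t \<omega>)) - real (card I) * p \<le> - c}
         \<le> exp (real (card I) * p * s\<^sup>2 - s * c)"
proof -
  have rv: "random_variable borel (X t)" for t using indep unfolding indep_vars_def by blast
  have mg: "(\<integral>\<^sup>+\<omega>. ennreal (exp (s * (- ((\<Sum>t\<in>I. indicator A (X t \<omega>)) - real (card I) * p)))) \<partial>M)
         \<le> ennreal (exp (real (card I) * p * (-s)\<^sup>2))"
    using chernoff_mgf[OF indep A p fin, of "-s"] s by (simp add: algebra_simps)
  have "prob {\<omega>\<in>space M. c \<le> - ((\<Sum>t\<in>I. indicator A (X t \<omega>)) - real (card I) * p)} \<le> exp (- s * c) * exp (real (card I) * p * (-s)\<^sup>2)"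
    by (rule chernoff_tail_gen[OF _ s(1) mg]) (use s A rv in auto)
  moreover have "{\<omega>\<in>space M. c \<le> - ((\<Sum>t\<in>I. indicator A (X t \<omega>)) - real (card I) * p)}
     = {\<omega>\<in>space M. (\<Sum>t\<in>I. indicator A (X t \<omega>)) - real (card I) * p \<le> - c}" by auto
  ultimately show ?thesis by (simp add: mult_exp_exp algebra_simps)
qed

end

lemma deriv_nonneg_of_mono:
  fixes F f :: "real \<Rightarrow> real"
  assumes mono: "mono F" and d: "(F has_real_derivative f x) (at x)"
  shows "0 \<le> f x"
proof (rule ccontr)
  assume "\<not> 0 \<le> f x"
  then obtain d where "d > 0" "\<forall>h>0. h < d \<longrightarrow> F x > F (x + h)"
    using DERIV_neg_dec_right[OF d] by force
  hence "F x > F (x + d/2)" by simp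
  moreover have "F x \<le> F (x + d/2)" using mono \<open>d > 0\<close> by (simp add: monoD)
  ultimately show False by simp
qed

lemma lip_from_deriv:
  fixes g g' :: "real \<Rightarrow> real"
  assumes d: "\<And>x. (g has_real_derivative g' x) (at x)" and b: "\<And>x. \<bar>g' x\<bar> \<le> B"
  shows "\<bar>g y - g x\<bar> \<le> B * \<bar>y - x\<bar>"
proof -
  have "norm (g y - g x) \<le> B * norm (y - x)"
    by (rule field_differentiable_bound[of UNIV g g' B y x])
       (use d b in \<open>auto intro: has_field_derivative_at_within\<close>)
  thus ?thesis by simp
qed

lemma taylor_bound:
  fixes F f f' :: "real \<Rightarrow> real"
  assumes dF: "\<And>x. (F has_real_derivative f x) (at x)"
    and df: "\<And>x. (f has_real_derivative f' x) (at x)"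
    and b: "\<And>x. \<bar>f' x\<bar> \<le> B"
  shows "\<bar>F (q + x) - F q - f q * x\<bar> \<le> B * x\<^sup>2"
proof -
  define g where "g u = F (q + u) - f q * u" for u
  define S where "S = {-\<bar>x\<bar>..\<bar>x\<bar>}"
  have gd: "(g has_field_derivative (f (q + u) - f q)) (at u within S)" for u
  proof -
    have "((\<lambda>u. F (q + u)) has_real_derivative f (q + u)) (at u)"
    proof -
      have "((+) q has_real_derivative 1) (at u)" by (auto intro!: derivative_eq_intros)
      from DERIV_chain2[OF dF this] show ?thesis by simp
    qed
    hence "(g has_real_derivative (f (q + u) - f q * 1)) (at u)"
      unfolding g_def by (intro derivative_intros) (auto intro!: derivative_eq_intros)
    thus ?thesis by (auto intro: has_field_derivative_at_within)
  qed
  have bnd: "norm (f (q + u) - f q) \<le> B * \<bar>x\<bar>" if "u \<in> S" for u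
  proof -
    have "\<bar>f (q + u) - f q\<bar> \<le> B * \<bar>(q + u) - q\<bar>" by (rule lip_from_deriv[OF df b])
    also have "\<dots> \<le> B * \<bar>x\<bar>"
    proof -
      have "0 \<le> B" using b[of 0] by linarith
      thus ?thesis using that by (auto simp: S_def intro!: mult_left_mono)
    qed
    finally show ?thesis by simp
  qed
  have "norm (g x - g 0) \<le> B * \<bar>x\<bar> * norm (x - 0)"
    by (rule field_differentiable_bound[of S g _ "B * \<bar>x\<bar>"]) (use gd bnd in \<open>auto simp: S_def\<close>)
  thus ?thesis by (simp add: g_def power2_eq_square abs_mult mult_ac)
qed

lemma gen_inv_eq:
  fixes F :: "real \<Rightarrow> real"
  assumes cont: "continuous_on UNIV F"
    and ne: "\<exists>x. \<beta> \<le> F x" and bb: "\<exists>T. \<forall>x. \<beta> \<le> F x \<longrightarrow> T \<le> x"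
  shows "F (gen_inv F \<beta>) = \<beta>"
proof -
  define S where "S = {x. \<beta> \<le> F x}"
  have cl: "closed S" unfolding S_def
    by (rule closed_Collect_le) (use cont in \<open>auto intro: continuous_intros\<close>)
  have bdd: "bdd_below S" using bb unfolding S_def bdd_below_def by auto
  have neS: "S \<noteq> {}" using ne by (auto simp: S_def)
  have inS: "Inf S \<in> S" by (rule closed_contains_Inf[OF neS bdd cl])
  hence ge: "\<beta> \<le> F (Inf S)" by (simp add: S_def)
  have lt: "F x < \<beta>" if "x < Inf S" for x
  proof (rule ccontr)
    assume "\<not> F x < \<beta>" hence "x \<in> S" by (simp add: S_def)
    hence "Inf S \<le> x" by (rule cInf_lower[OF _ bdd])
    with that show False by simp
  qed
  have "(F \<longlongrightarrow> F (Inf S)) (at_left (Inf S))"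
    using cont by (meson UNIV_I continuous_on_def tendsto_within_subset subset_UNIV)
  moreover have "\<forall>\<^sub>F x in at_left (Inf S). F x \<le> \<beta>"
    using eventually_at_left_real[of "Inf S - 1" "Inf S"] lt
    by (auto elim!: eventually_mono intro: less_imp_le)
  ultimately have "F (Inf S) \<le> \<beta>"
    by (rule tendsto_upperbound) (simp add: trivial_limit_at_left_real)
  thus ?thesis using ge by (simp add: gen_inv_def S_def[symmetric])
qed


lemma emp_cdf_alt: "emp_cdf X i j \<omega> z = (\<Sum>t\<in>{i..j}. indicator {..z} (X t \<omega>)) / real (j - i + 1)"
  unfolding emp_cdf_def by (intro arg_cong2[where f="(/)"] sum.cong) (auto simp: indicator_def)

lemma emp_cdf_mono: "z \<le> z' \<Longrightarrow> emp_cdf X i j \<omega> z \<le> emp_cdf X i j \<omega> z'"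
  unfolding emp_cdf_def by (intro divide_right_mono sum_mono) auto

lemma emp_cdf_one: assumes "\<And>t. t \<in> {i..j} \<Longrightarrow> X t \<omega> \<le> z" "i \<le> j"
  shows "emp_cdf X i j \<omega> z = 1"
proof -
  have "(\<Sum>t=i..j. (if X t \<omega> \<le> z then 1 else 0 :: real)) = (\<Sum>t=i..j. 1)"
    using assms by (intro sum.cong) auto
  thus ?thesis using assms(2) unfolding emp_cdf_def by (simp add: Suc_diff_le)
qed

lemma emp_cdf_zero: assumes "\<And>t. t \<in> {i..j} \<Longrightarrow> z < X t \<omega>"
  shows "emp_cdf X i j \<omega> z = 0"
proof -
  have "(\<Sum>t=i..j. (if X t \<omega> \<le> z then 1 else 0 :: real)) = (\<Sum>t=i..j. 0)"
    by (intro sum.cong refl) (metis assms atLeastAtMost_iff not_le)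
  thus ?thesis unfolding emp_cdf_def by simp
qed

lemma emp_set_props:
  assumes "i \<le> j" "0 < \<beta>" "\<beta> \<le> 1"
  shows "{x. \<beta> \<le> emp_cdf X i j \<omega> x} \<noteq> {}" "bdd_below {x. \<beta> \<le> emp_cdf X i j \<omega> x}"
proof -
  define Mx where "Mx = Max ((\<lambda>t. X t \<omega>) ` {i..j})"
  define Mn where "Mn = Min ((\<lambda>t. X t \<omega>) ` {i..j})"
  have "emp_cdf X i j \<omega> Mx = 1" by (rule emp_cdf_one) (use assms in \<open>auto simp: Mx_def\<close>)
  thus "{x. \<beta> \<le> emp_cdf X i j \<omega> x} \<noteq> {}" using assms by (metis (mono_tags, lifting) empty_iff mem_Collect_eq)
  have "Mn \<le> x" if "\<beta> \<le> emp_cdf X i j \<omega> x" for x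
  proof (rule ccontr)
    assume "\<not> Mn \<le> x"
    have "Mn \<le> X t \<omega>" if "t \<in> {i..j}" for t unfolding Mn_def by (rule Min_le) (use that in auto)
    hence "emp_cdf X i j \<omega> x = 0" using \<open>\<not> Mn \<le> x\<close> by (intro emp_cdf_zero) force
    with that assms show False by simp
  qed
  thus "bdd_below {x. \<beta> \<le> emp_cdf X i j \<omega> x}" by (auto simp: bdd_below_def)
qed

lemma quant_le:
  assumes "i \<le> j" "0 < \<beta>" "\<beta> \<le> 1" "\<beta> \<le> emp_cdf X i j \<omega> z"
  shows "emp_quantile X \<beta> i j \<omega> \<le> z"
  unfolding emp_quantile_def gen_inv_def
  by (rule cInf_lower) (use assms emp_set_props[OF assms(1-3)] in auto)

lemma quant_ge:
  assumes "i \<le> j" "0 < \<beta>" "\<beta> \<le> 1" "emp_cdf X i j \<omega> z < \<beta>"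
  shows "z \<le> emp_quantile X \<beta> i j \<omega>"
  unfolding emp_quantile_def gen_inv_def
proof (rule cInf_greatest)
  show "{x. \<beta> \<le> emp_cdf X i j \<omega> x} \<noteq> {}" by (rule emp_set_props(1)[OF assms(1-3)])
  fix x assume "x \<in> {x. \<beta> \<le> emp_cdf X i j \<omega> x}"
  hence "\<beta> \<le> emp_cdf X i j \<omega> x" by simp
  show "z \<le> x"
  proof (rule ccontr)
    assume "\<not> z \<le> x"
    hence "emp_cdf X i j \<omega> x \<le> emp_cdf X i j \<omega> z" by (intro emp_cdf_mono) simp
    with assms(4) \<open>\<beta> \<le> emp_cdf X i j \<omega> x\<close> show False by simp
  qed
qed

lemma emp_cdf_bounds: "i \<le> j \<Longrightarrow> 0 \<le> emp_cdf X i j \<omega> z \<and> emp_cdf X i j \<omega> z \<le> 1"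
proof -
  assume ij: "i \<le> j"
  have "(\<Sum>t=i..j. (if X t \<omega> \<le> z then 1 else 0 :: real)) \<le> (\<Sum>t=i..j. 1)"
    by (intro sum_mono) auto
  also have "\<dots> = real (j - i + 1)" using ij by (simp add: Suc_diff_le)
  finally show ?thesis unfolding emp_cdf_def by (auto intro!: sum_nonneg divide_nonneg_nonneg)
qed

lemma grid_argument:
  fixes G H :: "real \<Rightarrow> real"
  assumes monoG: "mono G"
    and tay: "\<And>x. \<bar>H x - f0 * x\<bar> \<le> B * x\<^sup>2"
    and f0: "0 < f0" and B: "0 \<le> B" and \<delta>: "0 < \<delta>"
    and grid: "\<And>k::int. \<bar>real_of_int k\<bar> \<le> K \<Longrightarrow> \<bar>G (real_of_int k * (\<delta>/4)) - H (real_of_int k * (\<delta>/4))\<bar> < e"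
    and K: "4 * \<bar>a\<bar> / \<delta> + 5 \<le> K"
    and cond: "B * (\<bar>a\<bar> + 2 * \<delta>)\<^sup>2 + e \<le> 3 * f0 * \<delta> / 4"
  shows "f0 * a \<le> G (a + \<delta>)" "G (a - \<delta>) < f0 * a"
proof -
  define h where "h = \<delta> / 4"
  have h: "0 < h" using \<delta> by (simp add: h_def)
  have sq: "B * y\<^sup>2 \<le> B * (\<bar>a\<bar> + 2 * \<delta>)\<^sup>2" if "\<bar>y\<bar> \<le> \<bar>a\<bar> + 2 * \<delta>" for y
  proof -
    have "\<bar>y\<bar>\<^sup>2 \<le> (\<bar>a\<bar> + 2 * \<delta>)\<^sup>2" using that by (intro power_mono) auto
    hence "y\<^sup>2 \<le> (\<bar>a\<bar> + 2 * \<delta>)\<^sup>2" by simp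
    thus ?thesis using B by (rule mult_left_mono)
  qed
  have A1: "4 * a / \<delta> \<le> 4 * \<bar>a\<bar> / \<delta>" using \<delta> by (intro divide_right_mono) auto
  have A2: "- (4 * \<bar>a\<bar> / \<delta>) \<le> 4 * a / \<delta>"
  proof -
    have "- (4 * \<bar>a\<bar>) / \<delta> \<le> 4 * a / \<delta>" using \<delta> by (intro divide_right_mono) auto
    thus ?thesis by simp
  qed
  have A3: "0 \<le> 4 * \<bar>a\<bar> / \<delta>" using \<delta> by simp
  have hd: "\<delta> = 4 * h" by (simp add: h_def)
  define k where "k = \<lfloor>(a + \<delta>) / h\<rfloor>"
  have k1: "real_of_int k * h \<le> a + \<delta>" using h unfolding k_def
    by (metis floor_divide_lower)
  have k2: "a + \<delta> < real_of_int k * h + h" using h unfolding k_def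
    by (metis floor_divide_upper add.commute distrib_left mult.commute mult_1)
  have kabs: "\<bar>real_of_int k\<bar> \<le> K"
  proof -
    have "real_of_int k \<le> (a + \<delta>) / h" using k1 h by (simp add: field_simps)
    moreover have "(a + \<delta>) / h - 1 < real_of_int k" using k2 h by (simp add: field_simps)
    moreover have "(a+\<delta>)/h = 4 * a / \<delta> + 4" using \<delta> by (simp add: h_def field_simps)
    ultimately show ?thesis using K A1 A2 A3 by (simp only: abs_le_iff) linarith
  qed
  have kh: "\<bar>real_of_int k * h\<bar> \<le> \<bar>a\<bar> + 2 * \<delta>"
    using k1 k2 h hd by (simp only: abs_le_iff) (cases "0 \<le> a"; simp; linarith)
  have "G (real_of_int k * h) \<le> G (a + \<delta>)" using monoG k1 by (simp add: monoD)
  moreover have "H (real_of_int k * h) - e < G (real_of_int k * h)"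
    using grid[OF kabs] unfolding h_def by (simp only: abs_less_iff) linarith
  moreover have "f0 * (real_of_int k * h) - B * (real_of_int k * h)\<^sup>2 \<le> H (real_of_int k * h)"
    using tay[of "real_of_int k * h"] by (simp only: abs_le_iff) linarith
  moreover have "B * (real_of_int k * h)\<^sup>2 \<le> B * (\<bar>a\<bar> + 2 * \<delta>)\<^sup>2" by (rule sq[OF kh])
  moreover have "f0 * (a + 3 * \<delta> / 4) \<le> f0 * (real_of_int k * h)"
    using k2 f0 hd by (intro mult_left_mono) auto
  moreover have "f0 * (a + 3 * \<delta> / 4) = f0 * a + 3 * f0 * \<delta> / 4" by (simp add: algebra_simps)
  ultimately show "f0 * a \<le> G (a + \<delta>)" using cond by linarith
  define l where "l = \<lceil>(a - \<delta>) / h\<rceil>"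
  have l1: "a - \<delta> \<le> real_of_int l * h"
  proof -
    have "(a - \<delta>) / h \<le> real_of_int l" unfolding l_def by (rule le_of_int_ceiling)
    thus ?thesis using h by (simp add: field_simps)
  qed
  have l2: "real_of_int l * h < a - \<delta> + h"
  proof -
    have "real_of_int l < (a - \<delta>) / h + 1" unfolding l_def by linarith
    thus ?thesis using h by (simp add: field_simps)
  qed
  have labs: "\<bar>real_of_int l\<bar> \<le> K"
  proof -
    have "(a - \<delta>) / h \<le> real_of_int l" using l1 h by (simp add: field_simps)
    moreover have "real_of_int l < (a - \<delta>) / h + 1" using l2 h by (simp add: field_simps)
    moreover have "(a-\<delta>)/h = 4 * a / \<delta> - 4" using \<delta> by (simp add: h_def field_simps)
    ultimately show ?thesis using K A1 A2 A3 by (simp only: abs_le_iff) linarith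
  qed
  have lh: "\<bar>real_of_int l * h\<bar> \<le> \<bar>a\<bar> + 2 * \<delta>"
    using l1 l2 h hd by (simp only: abs_le_iff) (cases "0 \<le> a"; simp; linarith)
  have "G (a - \<delta>) \<le> G (real_of_int l * h)" using monoG l1 by (simp add: monoD)
  moreover have "G (real_of_int l * h) < H (real_of_int l * h) + e"
    using grid[OF labs] unfolding h_def by (simp only: abs_less_iff) linarith
  moreover have "H (real_of_int l * h) \<le> f0 * (real_of_int l * h) + B * (real_of_int l * h)\<^sup>2"
    using tay[of "real_of_int l * h"] by (simp only: abs_le_iff) linarith
  moreover have "B * (real_of_int l * h)\<^sup>2 \<le> B * (\<bar>a\<bar> + 2 * \<delta>)\<^sup>2" by (rule sq[OF lh])
  moreover have "f0 * (real_of_int l * h) \<le> f0 * (a - 3 * \<delta> / 4)"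
    using l2 f0 hd by (intro mult_left_mono) auto
  moreover have "f0 * (a - 3 * \<delta> / 4) = f0 * a - 3 * f0 * \<delta> / 4" by (simp add: algebra_simps)
  ultimately show "G (a - \<delta>) < f0 * a" using cond by linarith
qed


lemma (in prob_space) chernoff_abs:
  fixes X :: "nat \<Rightarrow> 'a \<Rightarrow> real"
  assumes indep: "indep_vars (\<lambda>_. borel) X UNIV" and A: "A \<in> sets borel"
    and p: "\<And>t. prob {\<omega>\<in>space M. X t \<omega> \<in> A} = p"
    and fin: "finite I" and s: "0 < s" "s \<le> 1"
  shows "prob {\<omega>\<in>space M. c \<le> \<bar>(\<Sum>t\<in>I. indicator A (X t \<omega>)) - real (card I) * p\<bar>}
         \<le> 2 * exp (real (card I) * p * s\<^sup>2 - s * c)"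
proof -
  have rv: "random_variable borel (X t)" for t using indep unfolding indep_vars_def by blast
  have Z[measurable]: "(\<lambda>\<omega>. (\<Sum>t\<in>I. indicator A (X t \<omega>)) - real (card I) * p) \<in> borel_measurable M"
  proof -
    have ind: "(\<lambda>\<omega>. indicator A (X t \<omega>) :: real) \<in> borel_measurable M" for t
      by (rule measurable_compose[OF rv borel_measurable_indicator[OF A]])
    show ?thesis by (rule borel_measurable_diff[OF borel_measurable_sum[OF ind] borel_measurable_const])
  qed
  have "prob {\<omega>\<in>space M. c \<le> \<bar>(\<Sum>t\<in>I. indicator A (X t \<omega>)) - real (card I) * p\<bar>}
     = prob ({\<omega>\<in>space M. c \<le> (\<Sum>t\<in>I. indicator A (X t \<omega>)) - real (card I) * p}
       \<union> {\<omega>\<in>space M. (\<Sum>t\<in>I. indicator A (X t \<omega>)) - real (card I) * p \<le> - c})" by (rule arg_cong[where f=prob]) auto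
  also have "\<dots> \<le> prob {\<omega>\<in>space M. c \<le> (\<Sum>t\<in>I. indicator A (X t \<omega>)) - real (card I) * p}
       + prob {\<omega>\<in>space M. (\<Sum>t\<in>I. indicator A (X t \<omega>)) - real (card I) * p \<le> - c}"
    by (rule measure_Un_le) measurable
  also have "\<dots> \<le> exp (real (card I) * p * s\<^sup>2 - s * c) + exp (real (card I) * p * s\<^sup>2 - s * c)"
    by (intro add_mono chernoff_upper[OF indep A p fin s] chernoff_lower[OF indep A p fin s])
  finally show ?thesis by simp
qed

locale bah = prob_space M for M :: "'a measure" +
  fixes X :: "nat \<Rightarrow> 'a \<Rightarrow> real" and F f f' :: "real \<Rightarrow> real" and B \<beta> q :: real
  assumes indep: "indep_vars (\<lambda>_. borel) X UNIV"
    and cdf: "\<And>t x. prob {\<omega>\<in>space M. X t \<omega> \<le> x} = F x"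
    and F_deriv: "\<And>x. (F has_real_derivative f x) (at x)"
    and f_deriv: "\<And>x. (f has_real_derivative f' x) (at x)"
    and fB: "\<And>x. f x \<le> B" and f'B: "\<And>x. \<bar>f' x\<bar> \<le> B"
    and beta: "0 < \<beta>" "\<beta> < 1"
    and Fq: "F q = \<beta>"
    and f0pos: "0 < f q"
begin

lemma rv[measurable]: "random_variable borel (X t)"
  using indep unfolding indep_vars_def by blast

lemma F_mono: "mono F"
proof (rule monoI)
  fix x y :: real assume "x \<le> y"
  hence "{\<omega>\<in>space M. X 0 \<omega> \<le> x} \<subseteq> {\<omega>\<in>space M. X 0 \<omega> \<le> y}" by auto
  moreover have "{\<omega>\<in>space M. X 0 \<omega> \<le> y} \<in> events" by measurable
  ultimately have "prob {\<omega>\<in>space M. X 0 \<omega> \<le> x} \<le> prob {\<omega>\<in>space M. X 0 \<omega> \<le> y}"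
    by (rule finite_measure_mono)
  thus "F x \<le> F y" by (simp add: cdf)
qed

lemma F_le1: "F x \<le> 1" using cdf[of 0 x, symmetric] by simp
lemma F_ge0: "0 \<le> F x" using cdf[of 0 x, symmetric] by simp

lemma f_nonneg: "0 \<le> f x" by (rule deriv_nonneg_of_mono[OF F_mono F_deriv])
lemma B_pos: "0 < B" using f0pos fB[of q] by simp

lemma taylor: "\<bar>(F (q + x) - F q) - f q * x\<bar> \<le> B * x\<^sup>2"
  using taylor_bound[OF F_deriv f_deriv f'B, of q x] by simp

lemma F_lip: "\<bar>F y - F x\<bar> \<le> B * \<bar>y - x\<bar>"
  by (rule lip_from_deriv[OF F_deriv]) (use fB f_nonneg in auto)

definition IA :: "real \<Rightarrow> real set" where
  "IA x = (if 0 \<le> x then {q<..q+x} else {q+x<..q})"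

definition pA :: "real \<Rightarrow> real" where "pA x = \<bar>F (q + x) - F q\<bar>"

lemma IA_borel: "IA x \<in> sets borel" by (simp add: IA_def)

lemma prob_IA: "prob {\<omega>\<in>space M. X t \<omega> \<in> IA x} = pA x"
proof (cases "0 \<le> x")
  case True
  have "{\<omega>\<in>space M. X t \<omega> \<in> IA x} = {\<omega>\<in>space M. X t \<omega> \<le> q + x} - {\<omega>\<in>space M. X t \<omega> \<le> q}"
    using True by (auto simp: IA_def)
  hence "prob {\<omega>\<in>space M. X t \<omega> \<in> IA x} = prob {\<omega>\<in>space M. X t \<omega> \<le> q + x} - prob {\<omega>\<in>space M. X t \<omega> \<le> q}"
  proof -
    have e1: "{\<omega>\<in>space M. X t \<omega> \<le> q + x} \<in> events" by measurable
    have e2: "{\<omega>\<in>space M. X t \<omega> \<le> q} \<in> events" by measurable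
    have sub: "{\<omega>\<in>space M. X t \<omega> \<le> q} \<subseteq> {\<omega>\<in>space M. X t \<omega> \<le> q + x}" using True by auto
    show ?thesis unfolding \<open>{\<omega>\<in>space M. X t \<omega> \<in> IA x} = _\<close> by (rule finite_measure_Diff[OF e1 e2 sub])
  qed
  hence "prob {\<omega>\<in>space M. X t \<omega> \<in> IA x} = F (q + x) - F q" by (simp only: cdf)
  moreover have "F q \<le> F (q + x)" using True F_mono by (simp add: monoD)
  ultimately show ?thesis by (simp add: pA_def)
next
  case False
  have "{\<omega>\<in>space M. X t \<omega> \<in> IA x} = {\<omega>\<in>space M. X t \<omega> \<le> q} - {\<omega>\<in>space M. X t \<omega> \<le> q + x}"
    using False by (auto simp: IA_def)
  hence "prob {\<omega>\<in>space M. X t \<omega> \<in> IA x} = prob {\<omega>\<in>space M. X t \<omega> \<le> q} - prob {\<omega>\<in>space M. X t \<omega> \<le> q + x}"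
  proof -
    have e1: "{\<omega>\<in>space M. X t \<omega> \<le> q} \<in> events" by measurable
    have e2: "{\<omega>\<in>space M. X t \<omega> \<le> q + x} \<in> events" by measurable
    have sub: "{\<omega>\<in>space M. X t \<omega> \<le> q + x} \<subseteq> {\<omega>\<in>space M. X t \<omega> \<le> q}" using False by auto
    show ?thesis unfolding \<open>{\<omega>\<in>space M. X t \<omega> \<in> IA x} = _\<close> by (rule finite_measure_Diff[OF e1 e2 sub])
  qed
  hence "prob {\<omega>\<in>space M. X t \<omega> \<in> IA x} = F q - F (q + x)" by (simp only: cdf)
  moreover have "F (q + x) \<le> F q" using False F_mono by (simp add: monoD)
  ultimately show ?thesis by (simp add: pA_def)
qed

lemma pA_le: "pA x \<le> B * \<bar>x\<bar>" using F_lip[of "q + x" q] by (simp add: pA_def)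

definition cnt :: "nat \<Rightarrow> nat \<Rightarrow> real \<Rightarrow> 'a \<Rightarrow> real" where
  "cnt i j z \<omega> = (\<Sum>t\<in>{i..j}. indicator {..z} (X t \<omega>))"

definition cntA :: "nat \<Rightarrow> nat \<Rightarrow> real \<Rightarrow> 'a \<Rightarrow> real" where
  "cntA i j x \<omega> = (\<Sum>t\<in>{i..j}. indicator (IA x) (X t \<omega>))"

lemma emp_cnt: "emp_cdf X i j \<omega> z = cnt i j z \<omega> / real (j - i + 1)"
  by (simp add: emp_cdf_alt cnt_def)

lemma cntA_eq: "cntA i j x \<omega> = (if 0 \<le> x then cnt i j (q + x) \<omega> - cnt i j q \<omega> else cnt i j q \<omega> - cnt i j (q + x) \<omega>)"
proof -
  have "(indicator (IA x) (y::real) :: real) = (if 0 \<le> x then indicator {..q+x} y - indicator {..q} y else indicator {..q} y - indicator {..q+x} y)" for y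
    by (auto simp: IA_def indicator_def)
  hence "cntA i j x \<omega> = (\<Sum>t\<in>{i..j}. (if 0 \<le> x then indicator {..q+x} (X t \<omega>) - indicator {..q} (X t \<omega>) else indicator {..q} (X t \<omega>) - indicator {..q+x} (X t \<omega>)))"
    unfolding cntA_def by (intro sum.cong) auto
  thus ?thesis unfolding cnt_def by (cases "0 \<le> x") (simp_all only: if_True if_False sum_subtractf)
qed

lemma card_win: "card {i..j} = j - i + 1" if "i \<le> j" for i j :: nat using that by simp

end

context bah begin

definition aa :: "nat \<Rightarrow> nat \<Rightarrow> 'a \<Rightarrow> real" where
  "aa i j \<omega> = (\<beta> - emp_cdf X i j \<omega> q) / f q"

lemma det_large:
  assumes ij: "i \<le> j" and \<delta>: "0 < \<delta>" and aA: "\<bar>aa i j \<omega>\<bar> \<le> A0"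
    and K: "4 * A0 / \<delta> + 5 \<le> K" and cond: "B * (A0 + 2 * \<delta>)\<^sup>2 \<le> f q * \<delta> / 2"
    and grid: "\<And>k::int. \<bar>real_of_int k\<bar> \<le> K \<Longrightarrow>
       \<bar>cntA i j (real_of_int k * (\<delta>/4)) \<omega> - real (j - i + 1) * pA (real_of_int k * (\<delta>/4))\<bar>
         < real (j - i + 1) * (f q * \<delta> / 4)"
  shows "\<bar>emp_quantile X \<beta> i j \<omega> - q - aa i j \<omega>\<bar> \<le> \<delta>"
proof -
  define m where "m = real (j - i + 1)"
  have m: "0 < m" by (simp add: m_def)
  define G where "G x = emp_cdf X i j \<omega> (q + x) - emp_cdf X i j \<omega> q" for x
  define H where "H x = F (q + x) - F q" for x
  define a where "a = aa i j \<omega>"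
  have monoG: "mono G" unfolding G_def by (rule monoI) (simp add: emp_cdf_mono)
  have tay: "\<bar>H x - f q * x\<bar> \<le> B * x\<^sup>2" for x unfolding H_def by (rule taylor)
  have ec: "emp_cdf X i j \<omega> z = cnt i j z \<omega> / m" for z by (simp add: emp_cnt m_def)
  have GH: "\<bar>G x - H x\<bar> = \<bar>cntA i j x \<omega> - m * pA x\<bar> / m" for x
  proof (cases "0 \<le> x")
    case True
    hence "F q \<le> F (q + x)" using F_mono by (simp add: monoD)
    hence "G x - H x = (cntA i j x \<omega> - m * pA x) / m"
      using True m unfolding G_def H_def ec cntA_eq pA_def by (simp add: diff_divide_distrib)
    thus ?thesis using m by simp
  next
    case False
    hence "F (q + x) \<le> F q" using F_mono by (simp add: monoD)
    hence "G x - H x = - (cntA i j x \<omega> - m * pA x) / m"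
      using False m unfolding G_def H_def ec cntA_eq pA_def by (simp add: diff_divide_distrib)
    thus ?thesis using m by (simp add: abs_minus_commute)
  qed
  have f0: "0 < f q" by (rule f0pos)
  have grid': "\<bar>G (real_of_int k * (\<delta>/4)) - H (real_of_int k * (\<delta>/4))\<bar> < f q * \<delta> / 4"
    if "\<bar>real_of_int k\<bar> \<le> K" for k :: int
  proof -
    have "\<bar>cntA i j (real_of_int k * (\<delta>/4)) \<omega> - m * pA (real_of_int k * (\<delta>/4))\<bar> < m * (f q * \<delta> / 4)"
      using grid[OF that] by (simp add: m_def)
    thus ?thesis unfolding GH using m by (simp add: field_simps)
  qed
  have A0: "0 \<le> A0" using aA by linarith
  have K': "4 * \<bar>a\<bar> / \<delta> + 5 \<le> K"
  proof -
    have "4 * \<bar>a\<bar> / \<delta> \<le> 4 * A0 / \<delta>" using aA \<delta> by (intro divide_right_mono) (auto simp: a_def)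
    thus ?thesis using K by linarith
  qed
  have cond': "B * (\<bar>a\<bar> + 2 * \<delta>)\<^sup>2 + f q * \<delta> / 4 \<le> 3 * f q * \<delta> / 4"
  proof -
    have "(\<bar>a\<bar> + 2 * \<delta>)\<^sup>2 \<le> (A0 + 2 * \<delta>)\<^sup>2" using aA \<delta> by (intro power_mono) (auto simp: a_def)
    hence "B * (\<bar>a\<bar> + 2 * \<delta>)\<^sup>2 \<le> B * (A0 + 2 * \<delta>)\<^sup>2" using B_pos by (intro mult_left_mono) auto
    thus ?thesis using cond by linarith
  qed
  have B0: "0 \<le> B" using B_pos by simp
  note ga = grid_argument[OF monoG tay f0 B0 \<delta> grid' K' cond']
  have fa: "f q * a = \<beta> - emp_cdf X i j \<omega> q" using f0 by (simp add: a_def aa_def)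
  have "\<beta> \<le> emp_cdf X i j \<omega> (q + (a + \<delta>))" using ga(1) fa by (simp add: G_def)
  hence up: "emp_quantile X \<beta> i j \<omega> \<le> q + (a + \<delta>)"
    by (rule quant_le[OF ij beta(1) less_imp_le[OF beta(2)]])
  have "emp_cdf X i j \<omega> (q + (a - \<delta>)) < \<beta>" using ga(2) fa by (simp add: G_def)
  hence lo: "q + (a - \<delta>) \<le> emp_quantile X \<beta> i j \<omega>"
    by (rule quant_ge[OF ij beta(1) less_imp_le[OF beta(2)]])
  show ?thesis using up lo by (simp add: a_def abs_le_iff)
qed

lemma det_medium:
  assumes ij: "i \<le> j" and aA: "\<bar>aa i j \<omega>\<bar> \<le> A0"
    and c1: "\<beta> \<le> emp_cdf X i j \<omega> (q + \<eta>)" and c2: "emp_cdf X i j \<omega> (q - \<eta>) < \<beta>"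
  shows "\<bar>emp_quantile X \<beta> i j \<omega> - q - aa i j \<omega>\<bar> \<le> \<eta> + A0"
proof -
  have up: "emp_quantile X \<beta> i j \<omega> \<le> q + \<eta>"
    by (rule quant_le[OF ij beta(1) less_imp_le[OF beta(2)] c1])
  have lo: "q - \<eta> \<le> emp_quantile X \<beta> i j \<omega>"
    by (rule quant_ge[OF ij beta(1) less_imp_le[OF beta(2)] c2])
  show ?thesis using up lo aA by (simp add: abs_le_iff)
qed

lemma aa_bound: "i \<le> j \<Longrightarrow> \<bar>aa i j \<omega>\<bar> \<le> 1 / f q"
proof -
  assume ij: "i \<le> j"
  have "\<bar>\<beta> - emp_cdf X i j \<omega> q\<bar> \<le> 1" using emp_cdf_bounds[OF ij, of X \<omega> q] beta by (simp add: abs_le_iff)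
  thus ?thesis using f0pos by (simp add: aa_def abs_divide divide_right_mono)
qed

lemma det_small:
  assumes ij: "i \<le> j" and T: "\<And>t. t \<in> {i..j} \<Longrightarrow> - T < X t \<omega> \<and> X t \<omega> \<le> T"
  shows "\<bar>emp_quantile X \<beta> i j \<omega> - q - aa i j \<omega>\<bar> \<le> T + \<bar>q\<bar> + 1 / f q"
proof -
  have "emp_cdf X i j \<omega> T = 1" by (rule emp_cdf_one) (use T ij in auto)
  hence up: "emp_quantile X \<beta> i j \<omega> \<le> T"
    using beta by (intro quant_le[OF ij beta(1) less_imp_le[OF beta(2)]]) auto
  have "emp_cdf X i j \<omega> (- T) = 0" by (rule emp_cdf_zero) (use T in auto)
  hence lo: "- T \<le> emp_quantile X \<beta> i j \<omega>"
    using beta by (intro quant_ge[OF ij beta(1) less_imp_le[OF beta(2)]]) auto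
  have "- \<bar>q\<bar> \<le> q" "q \<le> \<bar>q\<bar>" by auto
  thus ?thesis using up lo aa_bound[OF ij, of \<omega>] by (simp only: abs_le_iff) linarith
qed

end

context bah begin

definition "\<delta>0 = f q / (32 * B)"
definition "\<eta> = \<delta>0 / 2"
definition "\<rho> = f q * \<eta> / 2"

lemma \<delta>0_pos: "0 < \<delta>0" using f0pos B_pos by (simp add: \<delta>0_def)
lemma \<eta>_pos: "0 < \<eta>" using \<delta>0_pos by (simp add: \<eta>_def)
lemma \<rho>_pos: "0 < \<rho>" using \<eta>_pos f0pos by (simp add: \<rho>_def)

lemma B\<eta>: "B * \<eta> = f q / 64" using B_pos by (simp add: \<eta>_def \<delta>0_def)

lemma F_up: "\<beta> + \<rho> \<le> F (q + \<eta>)"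
proof -
  have "\<bar>(F (q + \<eta>) - F q) - f q * \<eta>\<bar> \<le> B * \<eta>\<^sup>2" by (rule taylor)
  moreover have "B * \<eta>\<^sup>2 = f q * \<eta> / 64" using B\<eta> by (simp add: power2_eq_square mult.assoc[symmetric])
  moreover have "0 \<le> f q * \<eta>" using f0pos \<eta>_pos by simp
  ultimately show ?thesis unfolding abs_le_iff \<rho>_def Fq by linarith
qed

lemma F_lo: "F (q - \<eta>) \<le> \<beta> - \<rho>"
proof -
  have "\<bar>(F (q + - \<eta>) - F q) - f q * (- \<eta>)\<bar> \<le> B * (- \<eta>)\<^sup>2" by (rule taylor)
  moreover have "B * (-\<eta>)\<^sup>2 = f q * \<eta> / 64" using B\<eta> by (simp add: power2_eq_square mult.assoc[symmetric])
  moreover have "0 \<le> f q * \<eta>" using f0pos \<eta>_pos by simp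
  ultimately show ?thesis unfolding abs_le_iff \<rho>_def Fq by simp
qed

lemma \<rho>_le1: "\<rho> \<le> 1" using F_up F_le1[of "q + \<eta>"] beta by simp

end

locale bah_eps = bah +
  fixes \<epsilon> :: real
  assumes eps: "0 < \<epsilon>"
begin

definition "mm i j = real (j - i + 1)"
definition "\<delta>w S i j = \<epsilon> * S / mm i j"
definition "A0w r i j = r / (sqrt (mm i j) * f q)"
definition "Kw r S i j = 4 * A0w r i j / \<delta>w S i j + 5"

definition "EU r i j = {\<omega>\<in>space M. r * sqrt (mm i j) \<le> \<bar>cnt i j q \<omega> - mm i j * \<beta>\<bar>}"
definition "EC1 i j = {\<omega>\<in>space M. cnt i j (q + \<eta>) \<omega> - mm i j * F (q + \<eta>) \<le> - (mm i j * \<rho>)}"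
definition "EC2 i j = {\<omega>\<in>space M. mm i j * \<rho> \<le> cnt i j (q - \<eta>) \<omega> - mm i j * F (q - \<eta>)}"
definition "EGk S i j k = {\<omega>\<in>space M. mm i j * (f q * \<delta>w S i j / 4) \<le>
    \<bar>cntA i j (real_of_int k * (\<delta>w S i j / 4)) \<omega> - mm i j * pA (real_of_int k * (\<delta>w S i j / 4))\<bar>}"
definition "EG r S i j = (\<Union>k\<in>{k::int. \<bar>real_of_int k\<bar> \<le> Kw r S i j}. EGk S i j k)"
definition "Bad r S i j = EU r i j \<union> EC1 i j \<union> EC2 i j \<union> EG r S i j"

definition "Rw i j \<omega> = emp_quantile X \<beta> i j \<omega> - q - aa i j \<omega>"

lemma mm_pos: "0 < mm i j" by (simp add: mm_def)

lemma good_term: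
  assumes \<omega>: "\<omega> \<notin> Bad r S i j" and \<omega>s: "\<omega> \<in> space M" and ij: "i \<le> j" and r1: "1 \<le> r" and rm: "r ^ 4 \<le> mm i j"
    and S: "0 < S" and c8: "8 * B * r\<^sup>2 \<le> f q ^ 3 * \<epsilon> * S" and c2: "2 \<le> r * f q * \<delta>0"
  shows "mm i j * \<bar>Rw i j \<omega>\<bar> \<le> \<epsilon> * S"
proof -
  define m where "m = mm i j"
  have m: "0 < m" by (simp add: m_def mm_pos)
  define \<delta> where "\<delta> = \<delta>w S i j"
  have \<delta>: "0 < \<delta>" using eps S m by (simp add: \<delta>_def \<delta>w_def m_def)
  have m\<delta>: "m * \<delta> = \<epsilon> * S" using m by (simp add: \<delta>_def \<delta>w_def m_def)
  define A0 where "A0 = A0w r i j"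
  have f0: "0 < f q" by (rule f0pos)
  have sm: "0 < sqrt m" using m by simp
  have smm: "sqrt m * sqrt m = m" using m by simp
  have aA: "\<bar>aa i j \<omega>\<bar> \<le> A0"
  proof -
    have "\<omega> \<notin> EU r i j" using \<omega> by (simp add: Bad_def)
    hence lt: "\<bar>cnt i j q \<omega> - m * \<beta>\<bar> < r * sqrt m" using \<omega>s by (auto simp: EU_def m_def)
    have "aa i j \<omega> = - (cnt i j q \<omega> - m * \<beta>) / (m * f q)"
    proof -
      have ec: "emp_cdf X i j \<omega> q = cnt i j q \<omega> / m" by (simp add: emp_cnt m_def mm_def)
      show ?thesis using m f0 unfolding aa_def ec by (simp add: field_simps)
    qed
    hence "\<bar>aa i j \<omega>\<bar> = \<bar>cnt i j q \<omega> - m * \<beta>\<bar> / (m * f q)" using m f0 by (simp add: abs_divide abs_mult)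
    also have "\<dots> \<le> r * sqrt m / (m * f q)"
      using lt m f0 by (intro divide_right_mono) auto
    also have "r * sqrt m / (m * f q) = A0"
    proof -
      have e: "m * f q = sqrt m * (sqrt m * f q)" using smm by (simp add: mult.assoc[symmetric])
      show ?thesis unfolding e using sm f0 by (simp add: A0_def A0w_def m_def)
    qed
    finally show ?thesis .
  qed
  have Rle: "\<bar>Rw i j \<omega>\<bar> \<le> \<delta>"
  proof (cases "\<delta> \<le> \<delta>0")
    case True
    have K: "4 * A0 / \<delta> + 5 \<le> Kw r S i j" by (simp add: Kw_def A0_def \<delta>_def)
    have A0sq: "A0\<^sup>2 = r\<^sup>2 / (m * (f q)\<^sup>2)"
      using m by (simp add: A0_def A0w_def m_def[symmetric] power_divide power_mult_distrib)
    have sq: "(A0 + 2 * \<delta>)\<^sup>2 \<le> 2 * A0\<^sup>2 + 8 * \<delta>\<^sup>2"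
    proof -
      have "0 \<le> (A0 - 2 * \<delta>)\<^sup>2" by simp
      thus ?thesis by (simp add: power2_eq_square algebra_simps)
    qed
    have t1: "2 * B * A0\<^sup>2 \<le> f q * \<delta> / 4"
    proof -
      have "2 * B * A0\<^sup>2 = (8 * B * r\<^sup>2) / (4 * m * (f q)\<^sup>2)" using m f0 by (simp add: A0sq field_simps)
      also have "\<dots> \<le> (f q ^ 3 * \<epsilon> * S) / (4 * m * (f q)\<^sup>2)" using c8 m f0 by (intro divide_right_mono) auto
      also have "\<dots> = f q * \<delta> / 4" using m f0 m\<delta>
        by (simp add: \<delta>_def \<delta>w_def m_def[symmetric] field_simps power2_eq_square power3_eq_cube)
      finally show ?thesis .
    qed
    have t2: "8 * B * \<delta>\<^sup>2 \<le> f q * \<delta> / 4"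
    proof -
      have "32 * B * \<delta> \<le> f q" using True B_pos by (simp add: \<delta>0_def field_simps)
      hence "(32 * B * \<delta>) * \<delta> \<le> f q * \<delta>" using \<delta> by (intro mult_right_mono) auto
      thus ?thesis by (simp add: power2_eq_square)
    qed
    have cond: "B * (A0 + 2 * \<delta>)\<^sup>2 \<le> f q * \<delta> / 2"
    proof -
      have "B * (A0 + 2 * \<delta>)\<^sup>2 \<le> B * (2 * A0\<^sup>2 + 8 * \<delta>\<^sup>2)" using sq B_pos by (intro mult_left_mono) auto
      thus ?thesis using t1 t2 by (simp add: algebra_simps)
    qed
    have grid: "\<bar>cntA i j (real_of_int k * (\<delta>/4)) \<omega> - real (j - i + 1) * pA (real_of_int k * (\<delta>/4))\<bar>
         < real (j - i + 1) * (f q * \<delta> / 4)" if "\<bar>real_of_int k\<bar> \<le> Kw r S i j" for k :: int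
    proof -
      have "\<omega> \<notin> EGk S i j k" using \<omega> that by (auto simp: Bad_def EG_def)
      thus ?thesis using \<omega>s by (auto simp: EGk_def \<delta>_def mm_def)
    qed
    show ?thesis unfolding Rw_def by (rule det_large[OF ij \<delta> aA K cond grid])
  next
    case False
    have h1: "\<beta> \<le> emp_cdf X i j \<omega> (q + \<eta>)"
    proof -
      have "\<omega> \<notin> EC1 i j" using \<omega> by (simp add: Bad_def)
      hence "- (m * \<rho>) < cnt i j (q + \<eta>) \<omega> - m * F (q + \<eta>)" using \<omega>s by (auto simp: EC1_def m_def)
      moreover have "m * (\<beta> + \<rho>) \<le> m * F (q + \<eta>)" using F_up m by (intro mult_left_mono) auto
      ultimately have "m * \<beta> \<le> cnt i j (q + \<eta>) \<omega>" by (simp add: algebra_simps)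
      thus ?thesis using m by (simp add: emp_cnt m_def mm_def field_simps)
    qed
    have h2: "emp_cdf X i j \<omega> (q - \<eta>) < \<beta>"
    proof -
      have "\<omega> \<notin> EC2 i j" using \<omega> by (simp add: Bad_def)
      hence "cnt i j (q - \<eta>) \<omega> - m * F (q - \<eta>) < m * \<rho>" using \<omega>s by (auto simp: EC2_def m_def)
      moreover have "m * F (q - \<eta>) \<le> m * (\<beta> - \<rho>)" using F_lo m by (intro mult_left_mono) auto
      ultimately have "cnt i j (q - \<eta>) \<omega> < m * \<beta>" by (simp add: algebra_simps)
      thus ?thesis using m by (simp add: emp_cnt m_def mm_def field_simps)
    qed
    have A0le: "A0 \<le> \<delta>0 / 2"
    proof -
      have r0: "0 < r" using r1 by simp
      have "sqrt (r ^ 4) \<le> sqrt m" using rm by (simp add: m_def)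
      moreover have "sqrt (r ^ 4) = r\<^sup>2"
        by (metis (no_types) numeral_Bit0 power2_eq_square power_add real_sqrt_abs2 abs_of_nonneg zero_le_power2)
      ultimately have "r\<^sup>2 \<le> sqrt m" by simp
      hence "r / (sqrt m * f q) \<le> r / (r\<^sup>2 * f q)" using r0 f0 m
        by (intro divide_left_mono mult_right_mono mult_pos_pos) auto
      also have "\<dots> = 1 / (r * f q)" using r0 by (simp add: power2_eq_square)
      also have "\<dots> \<le> \<delta>0 / 2" using c2 r0 f0 by (simp add: field_simps)
      finally show ?thesis by (simp add: A0_def A0w_def m_def)
    qed
    have "\<bar>Rw i j \<omega>\<bar> \<le> \<eta> + A0" unfolding Rw_def by (rule det_medium[OF ij aA h1 h2])
    thus ?thesis using A0le False by (simp add: \<eta>_def)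
  qed
  have "m * \<bar>Rw i j \<omega>\<bar> \<le> m * \<delta>" using Rle m by (intro mult_left_mono) auto
  thus ?thesis using m\<delta> by (simp add: m_def)
qed

end

lemma (in prob_space) union_bound:
  assumes "finite I" "\<And>i. i \<in> I \<Longrightarrow> A i \<in> events" "\<And>i. i \<in> I \<Longrightarrow> prob (A i) \<le> b"
  shows "prob (\<Union>i\<in>I. A i) \<le> real (card I) * b"
proof -
  have "prob (\<Union>i\<in>I. A i) \<le> (\<Sum>i\<in>I. prob (A i))"
    by (rule measure_subadditive_finite) (use assms in \<open>auto simp: emeasure_eq_measure\<close>)
  also have "\<dots> \<le> (\<Sum>i\<in>I. b)" by (rule sum_mono) (use assms in auto)
  finally show ?thesis by simp
qed

lemma card_int_abs_le:
  fixes K :: real assumes "0 \<le> K"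
  shows "finite {k::int. \<bar>real_of_int k\<bar> \<le> K}" "real (card {k::int. \<bar>real_of_int k\<bar> \<le> K}) \<le> 2 * K + 1"
proof -
  have sub: "{k::int. \<bar>real_of_int k\<bar> \<le> K} \<subseteq> {-\<lfloor>K\<rfloor>..\<lfloor>K\<rfloor>}"
    by (auto simp: abs_le_iff le_floor_iff) (metis ceiling_le_iff floor_le_iff le_minus_iff minus_le_iff of_int_minus ceiling_minus linorder_not_less floor_less_iff)
  show "finite {k::int. \<bar>real_of_int k\<bar> \<le> K}" by (rule finite_subset[OF sub]) simp
  hence "card {k::int. \<bar>real_of_int k\<bar> \<le> K} \<le> card {-\<lfloor>K\<rfloor>..\<lfloor>K\<rfloor>}" using sub by (intro card_mono) auto
  also have "card {-\<lfloor>K\<rfloor>..\<lfloor>K\<rfloor>} = nat (2 * \<lfloor>K\<rfloor> + 1)" by simp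
  finally have "real (card {k::int. \<bar>real_of_int k\<bar> \<le> K}) \<le> real (nat (2 * \<lfloor>K\<rfloor> + 1))" by linarith
  also have "\<dots> = 2 * real_of_int \<lfloor>K\<rfloor> + 1" using assms by simp
  also have "\<dots> \<le> 2 * K + 1" by linarith
  finally show "real (card {k::int. \<bar>real_of_int k\<bar> \<le> K}) \<le> 2 * K + 1" .
qed

context bah_eps begin

lemma cnt_meas[measurable]: "(\<lambda>\<omega>. cnt i j z \<omega>) \<in> borel_measurable M"
  unfolding cnt_def by measurable
lemma cntA_meas[measurable]: "(\<lambda>\<omega>. cntA i j x \<omega>) \<in> borel_measurable M"
proof -
  have "(\<lambda>\<omega>. indicator (IA x) (X t \<omega>) :: real) \<in> borel_measurable M" for t
    by (rule measurable_compose[OF rv borel_measurable_indicator[OF IA_borel]])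
  thus ?thesis unfolding cntA_def by (rule borel_measurable_sum)
qed

definition "c2 = B * (1 / f q + 2 * \<epsilon>)"
definition "c3 = f q * \<epsilon> / 4"
definition "\<kappa> = min 1 (c3 / (2 * c2))"
definition "W r S = 2 * exp (- r\<^sup>2 / 4) + 2 * exp (- ((r ^ 4) * \<rho>\<^sup>2 / 4))
    + (8 * r / (f q * \<epsilon>) + 11) * (2 * exp (- (\<kappa> * S / r) * c3 / 2))"

lemma c2_pos: "0 < c2" using B_pos f0pos eps by (simp add: c2_def add_pos_pos)
lemma c3_pos: "0 < c3" using f0pos eps by (simp add: c3_def)
lemma \<kappa>_pos: "0 < \<kappa>" using c2_pos c3_pos by (simp add: \<kappa>_def)
lemma \<kappa>_le: "\<kappa> \<le> 1" "\<kappa> \<le> c3 / (2 * c2)" by (simp_all add: \<kappa>_def)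

lemma EU_ev: "EU r i j \<in> events" unfolding EU_def by measurable
lemma EC1_ev: "EC1 i j \<in> events" unfolding EC1_def by measurable
lemma EC2_ev: "EC2 i j \<in> events" unfolding EC2_def by measurable
lemma EGk_ev: "EGk S i j k \<in> events" unfolding EGk_def by measurable


lemma sum_ind_eq: "cnt i j z \<omega> = (\<Sum>t\<in>{i..j}. indicator {..z} (X t \<omega>))" by (simp add: cnt_def)

lemma card_ij: "i \<le> j \<Longrightarrow> real (card {i..j}) = mm i j" by (simp add: mm_def Suc_diff_le)

lemma prob_le: "prob {\<omega>\<in>space M. X t \<omega> \<in> {..z}} = F z" using cdf[of t z] by simp

lemma EU_prob:
  assumes ij: "i \<le> j" and r1: "1 \<le> r" and rm: "r ^ 4 \<le> mm i j"
  shows "prob (EU r i j) \<le> 2 * exp (- r\<^sup>2 / 4)"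
proof -
  define m where "m = mm i j"
  have m: "0 < m" by (simp add: m_def mm_pos)
  have sm: "0 < sqrt m" using m by simp
  have r2: "r \<le> r\<^sup>2" using r1 by (simp add: power2_eq_square)
  have "sqrt (r ^ 4) \<le> sqrt m" using rm by (simp add: m_def)
  moreover have "sqrt (r ^ 4) = r\<^sup>2"
    by (metis (no_types) numeral_Bit0 power2_eq_square power_add real_sqrt_abs2 abs_of_nonneg zero_le_power2)
  ultimately have r2m: "r\<^sup>2 \<le> sqrt m" by simp
  define s where "s = r / (2 * sqrt m)"
  have s0: "0 < s" using r1 sm by (simp add: s_def)
  have s1: "s \<le> 1" using r2 r2m sm r1 by (simp add: s_def field_simps)
  have "EU r i j = {\<omega>\<in>space M. r * sqrt m \<le> \<bar>(\<Sum>t\<in>{i..j}. indicator {..q} (X t \<omega>)) - real (card {i..j}) * \<beta>\<bar>}"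
    unfolding card_ij[OF ij] by (simp add: EU_def m_def sum_ind_eq)
  also have "prob \<dots> \<le> 2 * exp (real (card {i..j}) * \<beta> * s\<^sup>2 - s * (r * sqrt m))"
    by (rule chernoff_abs[OF indep _ _ _ s0 s1]) (simp_all add: cdf Fq)
  also have "real (card {i..j}) * \<beta> * s\<^sup>2 - s * (r * sqrt m) = \<beta> * r\<^sup>2 / 4 - r\<^sup>2 / 2"
    using sm m unfolding card_ij[OF ij] m_def[symmetric] by (simp add: s_def power2_eq_square field_simps)
  also have "\<dots> \<le> - r\<^sup>2 / 4" using beta mult_right_mono[of \<beta> 1 "r\<^sup>2"] by (simp add: field_simps)
  finally show ?thesis by simp
qed

lemma EC1_prob:
  assumes ij: "i \<le> j" and rm: "r ^ 4 \<le> mm i j"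
  shows "prob (EC1 i j) \<le> exp (- ((r ^ 4) * \<rho>\<^sup>2 / 4))"
proof -
  define m where "m = mm i j"
  have m: "0 < m" by (simp add: m_def mm_pos)
  define s where "s = \<rho> / 2"
  have s0: "0 < s" using \<rho>_pos by (simp add: s_def)
  have s1: "s \<le> 1" using \<rho>_le1 by (simp add: s_def)
  have "EC1 i j = {\<omega>\<in>space M. (\<Sum>t\<in>{i..j}. indicator {..q+\<eta>} (X t \<omega>)) - real (card {i..j}) * F (q + \<eta>) \<le> - (m * \<rho>)}"
    unfolding card_ij[OF ij] by (simp add: EC1_def m_def sum_ind_eq)
  also have "prob \<dots> \<le> exp (real (card {i..j}) * F (q + \<eta>) * s\<^sup>2 - s * (m * \<rho>))"
    by (rule chernoff_lower[OF indep _ _ _ s0 s1]) (simp_all add: cdf)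
  also have "real (card {i..j}) * F (q + \<eta>) * s\<^sup>2 - s * (m * \<rho>) \<le> m * s\<^sup>2 - s * (m * \<rho>)"
    unfolding card_ij[OF ij] m_def[symmetric] using F_le1[of "q + \<eta>"] m by (intro diff_right_mono mult_right_mono) auto
  also have "m * s\<^sup>2 - s * (m * \<rho>) = - (m * \<rho>\<^sup>2 / 4)" by (simp add: s_def power2_eq_square field_simps)
  also have "\<dots> \<le> - ((r ^ 4) * \<rho>\<^sup>2 / 4)" using rm by (simp add: m_def mult_right_mono)
  finally show ?thesis by simp
qed

lemma EC2_prob:
  assumes ij: "i \<le> j" and rm: "r ^ 4 \<le> mm i j"
  shows "prob (EC2 i j) \<le> exp (- ((r ^ 4) * \<rho>\<^sup>2 / 4))"
proof -
  define m where "m = mm i j"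
  have m: "0 < m" by (simp add: m_def mm_pos)
  define s where "s = \<rho> / 2"
  have s0: "0 < s" using \<rho>_pos by (simp add: s_def)
  have s1: "s \<le> 1" using \<rho>_le1 by (simp add: s_def)
  have "EC2 i j = {\<omega>\<in>space M. m * \<rho> \<le> (\<Sum>t\<in>{i..j}. indicator {..q-\<eta>} (X t \<omega>)) - real (card {i..j}) * F (q - \<eta>)}"
    unfolding card_ij[OF ij] by (simp add: EC2_def m_def sum_ind_eq)
  also have "prob \<dots> \<le> exp (real (card {i..j}) * F (q - \<eta>) * s\<^sup>2 - s * (m * \<rho>))"
    by (rule chernoff_upper[OF indep _ _ _ s0 s1]) (simp_all add: cdf)
  also have "real (card {i..j}) * F (q - \<eta>) * s\<^sup>2 - s * (m * \<rho>) \<le> m * s\<^sup>2 - s * (m * \<rho>)"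
    unfolding card_ij[OF ij] m_def[symmetric] using F_le1[of "q - \<eta>"] m by (intro diff_right_mono mult_right_mono) auto
  also have "m * s\<^sup>2 - s * (m * \<rho>) = - (m * \<rho>\<^sup>2 / 4)" by (simp add: s_def power2_eq_square field_simps)
  also have "\<dots> \<le> - ((r ^ 4) * \<rho>\<^sup>2 / 4)" using rm by (simp add: m_def mult_right_mono)
  finally show ?thesis by simp
qed

end
context bah_eps begin

lemma EG_prob:
  assumes ij: "i \<le> j" and r1: "1 \<le> r" and mS: "mm i j \<le> S\<^sup>2" and S: "0 < S"
  shows "prob (EG r S i j) \<le> (8 * r / (f q * \<epsilon>) + 11) * (2 * exp (- (\<kappa> * S / r) * c3 / 2))"
proof -
  define m where "m = mm i j"
  have m: "0 < m" by (simp add: m_def mm_pos)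
  have sm: "0 < sqrt m" using m by simp
  have smm: "sqrt m * sqrt m = m" using m by simp
  have smS: "sqrt m \<le> S" using mS S by (simp add: m_def real_le_lsqrt)
  have f0: "0 < f q" by (rule f0pos)
  define \<delta> where "\<delta> = \<delta>w S i j"
  have \<delta>: "0 < \<delta>" using eps S m by (simp add: \<delta>_def \<delta>w_def m_def)
  have m\<delta>: "m * \<delta> = \<epsilon> * S" using m by (simp add: \<delta>_def \<delta>w_def m_def)
  define A0 where "A0 = A0w r i j"
  have A0: "0 \<le> A0" using r1 f0 sm by (simp add: A0_def A0w_def m_def)
  define K where "K = Kw r S i j"
  have KA: "K = 4 * A0 / \<delta> + 5" by (simp add: K_def Kw_def A0_def \<delta>_def)
  have K0: "0 \<le> K" using KA A0 \<delta> by simp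
  have mA0: "m * A0 = r * sqrt m / f q"
  proof -
    have "m * A0 = m * r / (sqrt m * f q)" by (simp add: A0_def A0w_def m_def)
    also have "\<dots> = (m / sqrt m) * (r / f q)" by (rule times_divide_times_eq[symmetric])
    also have "m / sqrt m = sqrt m" using m by (simp add: real_div_sqrt)
    also have "sqrt m * (r / f q) = r * sqrt m / f q" by simp
    finally show ?thesis .
  qed
  have mA0S: "m * A0 \<le> r * S / f q"
    unfolding mA0 using smS r1 f0 by (intro divide_right_mono mult_left_mono) auto
  define s where "s = \<kappa> / r"
  have s0: "0 < s" using \<kappa>_pos r1 by (simp add: s_def)
  have s1: "s \<le> 1" using \<kappa>_le(1) r1 by (simp add: s_def field_simps)
  have each: "prob (EGk S i j k) \<le> 2 * exp (- (\<kappa> * S / r) * c3 / 2)" if k: "\<bar>real_of_int k\<bar> \<le> K" for k :: int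
  proof -
    define x where "x = real_of_int k * (\<delta> / 4)"
    have xK: "\<bar>x\<bar> \<le> K * (\<delta> / 4)" using k \<delta> by (simp add: x_def abs_mult mult_right_mono)
    have "m * pA x \<le> m * (B * (K * (\<delta> / 4)))"
    proof -
      have "pA x \<le> B * (K * (\<delta> / 4))" using pA_le[of x] xK B_pos by (meson mult_left_mono less_imp_le order_trans)
      thus ?thesis using m by (intro mult_left_mono) auto
    qed
    also have "m * (B * (K * (\<delta> / 4))) = B * (m * A0 + 5 / 4 * (m * \<delta>))"
      using \<delta> by (simp add: KA field_simps)
    also have "\<dots> \<le> B * (r * S / f q + 5 / 4 * (\<epsilon> * S))"
      using mA0S B_pos by (simp add: m\<delta>)
    also have "\<dots> \<le> c2 * r * S"
    proof -
      have "5 / 4 * (\<epsilon> * S) \<le> 2 * \<epsilon> * r * S"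
      proof -
        have "5 / 4 * (\<epsilon> * S) \<le> 2 * (\<epsilon> * S)" using eps S by simp
        also have "\<dots> \<le> 2 * (\<epsilon> * S) * r" using eps S r1 by simp
        finally show ?thesis by (simp add: mult_ac)
      qed
      hence "B * (r * S / f q + 5 / 4 * (\<epsilon> * S)) \<le> B * (r * S / f q + 2 * \<epsilon> * r * S)"
        using B_pos by simp
      also have "\<dots> = c2 * r * S" by (simp add: c2_def field_simps)
      finally show ?thesis .
    qed
    finally have mp: "m * pA x \<le> c2 * r * S" .
    have "prob (EGk S i j k) = prob {\<omega>\<in>space M. m * (f q * \<delta> / 4) \<le>
          \<bar>(\<Sum>t\<in>{i..j}. indicator (IA x) (X t \<omega>)) - real (card {i..j}) * pA x\<bar>}"
      unfolding card_ij[OF ij] by (simp add: EGk_def m_def \<delta>_def x_def cntA_def)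
    also have "\<dots> \<le> 2 * exp (real (card {i..j}) * pA x * s\<^sup>2 - s * (m * (f q * \<delta> / 4)))"
      by (rule chernoff_abs[OF indep IA_borel prob_IA _ s0 s1]) simp
    also have "real (card {i..j}) * pA x * s\<^sup>2 - s * (m * (f q * \<delta> / 4)) \<le> c2 * r * S * s\<^sup>2 - s * (c3 * S)"
    proof -
      have "real (card {i..j}) * pA x * s\<^sup>2 \<le> c2 * r * S * s\<^sup>2"
        unfolding card_ij[OF ij] m_def[symmetric] using mp by (intro mult_right_mono) auto
      moreover have "m * (f q * \<delta> / 4) = c3 * S" using m\<delta> by (simp add: c3_def field_simps)
      ultimately show ?thesis by simp
    qed
    also have "c2 * r * S * s\<^sup>2 - s * (c3 * S) = (\<kappa> * S / r) * (c2 * \<kappa> - c3)"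
      using r1 by (simp add: s_def power2_eq_square field_simps)
    also have "\<dots> \<le> (\<kappa> * S / r) * (- c3 / 2)"
    proof -
      have "c2 * \<kappa> \<le> c3 / 2" using \<kappa>_le(2) c2_pos by (simp add: field_simps)
      thus ?thesis using \<kappa>_pos S r1 by (intro mult_left_mono) auto
    qed
    also have "\<dots> = - (\<kappa> * S / r) * c3 / 2" by simp
    finally show ?thesis by simp
  qed
  have "prob (EG r S i j) \<le> real (card {k::int. \<bar>real_of_int k\<bar> \<le> K}) * (2 * exp (- (\<kappa> * S / r) * c3 / 2))"
    unfolding EG_def K_def[symmetric]
    by (rule union_bound[OF card_int_abs_le(1)[OF K0]]) (use EGk_ev each in auto)
  also have "\<dots> \<le> (8 * r / (f q * \<epsilon>) + 11) * (2 * exp (- (\<kappa> * S / r) * c3 / 2))"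
  proof (rule mult_right_mono)
    have "real (card {k::int. \<bar>real_of_int k\<bar> \<le> K}) \<le> 2 * K + 1" by (rule card_int_abs_le(2)[OF K0])
    also have "2 * K + 1 = 8 * (A0 / \<delta>) + 11" by (simp add: KA)
    also have "A0 / \<delta> \<le> r / (f q * \<epsilon>)"
    proof -
      have "A0 / \<delta> = (m * A0) / (m * \<delta>)" using m by simp
      also have "\<dots> \<le> (r * S / f q) / (\<epsilon> * S)" unfolding m\<delta> using mA0S eps S by (intro divide_right_mono) auto
      also have "\<dots> = r / (f q * \<epsilon>)" using S by (simp add: field_simps)
      finally show ?thesis .
    qed
    finally show "real (card {k::int. \<bar>real_of_int k\<bar> \<le> K}) \<le> 8 * r / (f q * \<epsilon>) + 11" by simp
  qed simp
  finally show ?thesis .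
qed

lemma Bad_prob:
  assumes ij: "i \<le> j" and r1: "1 \<le> r" and rm: "r ^ 4 \<le> mm i j" and mS: "mm i j \<le> S\<^sup>2" and S: "0 < S"
  shows "prob (Bad r S i j) \<le> W r S"
proof -
  have ev: "EG r S i j \<in> events"
  proof -
    have "Kw r S i j \<ge> 0" using r1 f0pos eps S mm_pos[of i j] by (simp add: Kw_def A0w_def \<delta>w_def)
    thus ?thesis unfolding EG_def by (intro sets.finite_UN card_int_abs_le(1) EGk_ev) auto
  qed
  have "prob (Bad r S i j) \<le> prob (EU r i j \<union> EC1 i j \<union> EC2 i j) + prob (EG r S i j)"
    unfolding Bad_def by (rule measure_Un_le) (use EU_ev EC1_ev EC2_ev ev in auto)
  also have "prob (EU r i j \<union> EC1 i j \<union> EC2 i j) \<le> prob (EU r i j \<union> EC1 i j) + prob (EC2 i j)"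
    by (rule measure_Un_le) (use EU_ev EC1_ev EC2_ev in auto)
  also have "prob (EU r i j \<union> EC1 i j) \<le> prob (EU r i j) + prob (EC1 i j)"
    by (rule measure_Un_le) (use EU_ev EC1_ev in auto)
  finally have "prob (Bad r S i j) \<le> prob (EU r i j) + prob (EC1 i j) + prob (EC2 i j) + prob (EG r S i j)" by simp
  also have "\<dots> \<le> 2 * exp (- r\<^sup>2 / 4) + exp (- ((r ^ 4) * \<rho>\<^sup>2 / 4)) + exp (- ((r ^ 4) * \<rho>\<^sup>2 / 4))
      + (8 * r / (f q * \<epsilon>) + 11) * (2 * exp (- (\<kappa> * S / r) * c3 / 2))"
    by (intro add_mono EU_prob[OF ij r1 rm] EC1_prob[OF ij rm] EC2_prob[OF ij rm] EG_prob[OF ij r1 mS S])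
  finally show ?thesis by (simp add: W_def)
qed

end

lemma asym_main:
  fixes a b c d :: real assumes "0 < a" "0 < b" "0 < c" "0 < d"
  shows "((\<lambda>n::nat. real n ^ 2 * (2 * exp (- (real n powr (1/20))\<^sup>2 / 4)
     + 2 * exp (- ((real n powr (1/20)) ^ 4 * a / 4))
     + (8 * real n powr (1/20) / b + 11) * (2 * exp (- (c * sqrt (real n) / real n powr (1/20)) * d / 2))))
     \<longlongrightarrow> 0) sequentially"
  using assms by real_asymp

lemma asym_tail:
  fixes C lam :: real assumes lam: "lam > 18 / 5"
  shows "((\<lambda>n::nat. real n * (C * (real n powr (5/18) / 2) powr (- lam) + C * (real n powr (5/18)) powr (- lam))) \<longlongrightarrow> 0) sequentially"
proof -
  have e: "1 - 5 / 18 * lam < 0" using lam by simp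
  have L: "((\<lambda>n::nat. real n powr (1 - 5 / 18 * lam)) \<longlongrightarrow> 0) sequentially"
    by (rule tendsto_neg_powr[OF e filterlim_real_sequentially])
  hence L2: "((\<lambda>n::nat. (C * 2 powr lam + C) * real n powr (1 - 5 / 18 * lam)) \<longlongrightarrow> 0) sequentially"
    by (rule tendsto_mult_right_zero)
  show ?thesis
  proof (rule Lim_transform_eventually[OF L2])
    show "\<forall>\<^sub>F n in sequentially. (C * 2 powr lam + C) * real n powr (1 - 5 / 18 * lam) =
        real n * (C * (real n powr (5/18) / 2) powr (- lam) + C * (real n powr (5/18)) powr (- lam))"
    proof (rule eventually_sequentiallyI[of 1])
      fix n :: nat assume n: "1 \<le> n"
      hence np: "0 < real n" by simp
      have a: "(real n powr (5/18)) powr (- lam) = real n powr (- (5/18 * lam))"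
        by (simp add: powr_powr)
      have b0: "(real n powr (5/18) / 2) powr (- lam) = (real n powr (5/18)) powr (- lam) / 2 powr (- lam)"
        by (rule powr_divide)
      have b: "(real n powr (5/18) / 2) powr (- lam) = 2 powr lam * real n powr (- (5/18 * lam))"
        unfolding b0 a by (simp add: powr_minus_divide)
      have c: "real n * real n powr (- (5/18 * lam)) = real n powr (1 - 5 / 18 * lam)"
      proof -
        have "real n powr (1 - 5 / 18 * lam) = real n powr 1 * real n powr (- (5/18 * lam))"
          unfolding powr_add[symmetric] by simp
        thus ?thesis using np by simp
      qed
      show "(C * 2 powr lam + C) * real n powr (1 - 5 / 18 * lam) =
        real n * (C * (real n powr (5/18) / 2) powr (- lam) + C * (real n powr (5/18)) powr (- lam))"
        unfolding a b c[symmetric] by (simp add: algebra_simps)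
    qed
  qed
qed

lemma ev_a: "0 < c \<Longrightarrow> eventually (\<lambda>n::nat. 8 * b * (real n powr (1/20))\<^sup>2 \<le> c * sqrt (real n)) sequentially"
  by real_asymp
lemma ev_b: "0 < c \<Longrightarrow> eventually (\<lambda>n::nat. 2 \<le> real n powr (1/20) * c) sequentially"
  by real_asymp
lemma ev_c: "0 < c \<Longrightarrow> eventually (\<lambda>n::nat. (real n powr (1/20)) ^ 4 * (real n powr (5/18) + d) \<le> c * sqrt (real n)) sequentially"
  by real_asymp

lemma (in prob_space) prob_mono_any: "A \<subseteq> B \<Longrightarrow> B \<in> events \<Longrightarrow> prob A \<le> prob B"
  by (cases "A \<in> events") (auto intro: finite_measure_mono simp: measure_notin_sets)


context bah_eps begin

lemma stat_bound:
  assumes \<omega>s: "\<omega> \<in> space M" and n2: "2 \<le> n" and r1: "1 \<le> r" and SS: "S = sqrt (real n)"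
    and c8: "8 * B * r\<^sup>2 \<le> f q ^ 3 * \<epsilon> * S" and c2: "2 \<le> r * f q * \<delta>0"
    and T0: "0 \<le> T" and cs: "r ^ 4 * (T + \<bar>q\<bar> + 1 / f q) \<le> \<epsilon> * S"
    and notTl: "\<And>t. t \<in> {1..n} \<Longrightarrow> - T < X t \<omega> \<and> X t \<omega> \<le> T"
    and notBad: "\<And>i j. 1 \<le> i \<Longrightarrow> i < j \<Longrightarrow> j \<le> n \<Longrightarrow> r ^ 4 \<le> mm i j \<Longrightarrow> \<omega> \<notin> Bad r S i j"
  shows "\<bar>bahadur_stat X \<beta> q (f q) n \<omega>\<bar> \<le> \<epsilon>"
proof -
  have S: "0 < S" using n2 SS by simp
  have tm: "mm i j * \<bar>Rw i j \<omega>\<bar> \<le> \<epsilon> * S" if ij: "1 \<le> i" "i < j" "j \<le> n" for i j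
  proof (cases "r ^ 4 \<le> mm i j")
    case True
    show ?thesis by (rule good_term[OF notBad[OF ij True] \<omega>s _ r1 True S c8 c2]) (use ij in simp)
  next
    case False
    have "\<bar>Rw i j \<omega>\<bar> \<le> T + \<bar>q\<bar> + 1 / f q"
      unfolding Rw_def by (rule det_small) (use ij notTl in auto)
    hence "mm i j * \<bar>Rw i j \<omega>\<bar> \<le> mm i j * (T + \<bar>q\<bar> + 1 / f q)" using mm_pos[of i j] by (intro mult_left_mono) auto
    also have "\<dots> \<le> r ^ 4 * (T + \<bar>q\<bar> + 1 / f q)"
      using False T0 f0pos by (intro mult_right_mono) auto
    finally show ?thesis using cs by linarith
  qed
  define g where "g = (\<lambda>(i::nat, j::nat). real (j - i + 1) *
      \<bar>emp_quantile X \<beta> i j \<omega> - q - (\<beta> - emp_cdf X i j \<omega> q) / f q\<bar>)"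
  define V where "V = {real (j - i + 1) * \<bar>emp_quantile X \<beta> i j \<omega> - q - (\<beta> - emp_cdf X i j \<omega> q) / f q\<bar>
          | i j. 1 \<le> i \<and> i < j \<and> j \<le> n}"
  have gR: "g (i, j) = mm i j * \<bar>Rw i j \<omega>\<bar>" for i j by (simp add: g_def mm_def Rw_def aa_def)
  have Vsub: "V \<subseteq> g ` ({1..n} \<times> {1..n})"
  proof
    fix v assume "v \<in> V"
    then obtain i j where "v = g (i, j)" "1 \<le> i" "i < j" "j \<le> n" by (auto simp: V_def g_def)
    thus "v \<in> g ` ({1..n} \<times> {1..n})" by force
  qed
  have fin: "finite V" by (rule finite_subset[OF Vsub]) simp
  have ne: "g (1, 2) \<in> V" unfolding V_def mem_Collect_eq
    apply (rule exI[of _ "1::nat"], rule exI[of _ "2::nat"])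
    using n2 by (simp add: g_def)
  have bnd: "0 \<le> v \<and> v \<le> \<epsilon> * S" if vV: "v \<in> V" for v
  proof -
    obtain i j where v: "v = real (j - i + 1) * \<bar>emp_quantile X \<beta> i j \<omega> - q - (\<beta> - emp_cdf X i j \<omega> q) / f q\<bar>"
      and ij: "1 \<le> i" "i < j" "j \<le> n" using vV unfolding V_def by blast
    have "v = g (i, j)" by (simp add: v g_def)
    thus ?thesis using ij using tm[of i j] mm_pos[of i j] by (simp add: gR)
  qed
  have Mle: "Max V \<le> \<epsilon> * S" using fin ne bnd by (subst Max_le_iff) auto
  have Mge: "0 \<le> Max V" using bnd[OF ne] Max_ge[OF fin ne] by linarith
  have st: "bahadur_stat X \<beta> q (f q) n \<omega> = Max V / S"
    by (simp add: bahadur_stat_def V_def SS)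
  show ?thesis unfolding st using Mle Mge S by (simp add: field_simps)
qed

end

theorem theorem4p4:
  fixes M :: "'a measure" and X :: "nat \<Rightarrow> 'a \<Rightarrow> real"
    and F f f' :: "real \<Rightarrow> real" and C lam \<beta> :: real
  assumes "prob_space M"
    and indep: "prob_space.indep_vars M (\<lambda>_. borel) X UNIV"
    and cdf: "\<And>t x. measure M {\<omega> \<in> space M. X t \<omega> \<le> x} = F x"
    and F_deriv: "\<And>x. (F has_real_derivative f x) (at x)"
    and f_deriv: "\<And>x. (f has_real_derivative f' x) (at x)"
    and bdd: "\<exists>B. \<forall>x. f x + \<bar>f' x\<bar> \<le> B"
    and C_pos: "C > 0"
    and tail: "\<And>x. x > 0 \<Longrightarrow> measure M {\<omega> \<in> space M. \<bar>X 1 \<omega>\<bar> > x} \<le> C * x powr (-lam)"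
    and lam_gt: "lam > 18 / 5"
    and beta: "0 < \<beta>" "\<beta> < 1"
    and fq_pos: "f (gen_inv F \<beta>) > 0"
  shows "\<forall>\<epsilon>>0. ((\<lambda>n. measure M {\<omega> \<in> space M.
            \<bar>bahadur_stat X \<beta> (gen_inv F \<beta>) (f (gen_inv F \<beta>)) n \<omega>\<bar> > \<epsilon>})
           \<longlonglongrightarrow> 0)"
proof -
  interpret P: prob_space M by fact
  have rvX[measurable]: "X t \<in> borel_measurable M" for t
    using indep unfolding P.indep_vars_def by blast
  have Fmono: "mono F"
  proof (rule monoI)
    fix x y :: real assume "x \<le> y"
    hence "{\<omega>\<in>space M. X 0 \<omega> \<le> x} \<subseteq> {\<omega>\<in>space M. X 0 \<omega> \<le> y}" by auto
    moreover have "{\<omega>\<in>space M. X 0 \<omega> \<le> y} \<in> P.events" by measurable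
    ultimately have "P.prob {\<omega>\<in>space M. X 0 \<omega> \<le> x} \<le> P.prob {\<omega>\<in>space M. X 0 \<omega> \<le> y}"
      by (rule P.finite_measure_mono)
    thus "F x \<le> F y" by (simp add: cdf)
  qed
  have fnn: "0 \<le> f x" for x by (rule deriv_nonneg_of_mono[OF Fmono F_deriv])
  obtain B0 where B0: "\<And>x. f x + \<bar>f' x\<bar> \<le> B0" using bdd by blast
  have fB: "f x \<le> B0" for x using B0[of x] by simp
  have f'B: "\<bar>f' x\<bar> \<le> B0" for x using B0[of x] fnn[of x] by simp
  have up_tail: "1 - F x \<le> C * x powr (- lam)" if x: "0 < x" for x
  proof -
    have e1: "{\<omega>\<in>space M. X 1 \<omega> \<le> x} \<in> P.events" by measurable
    have "P.prob {\<omega>\<in>space M. x < X 1 \<omega>} = P.prob (space M - {\<omega>\<in>space M. X 1 \<omega> \<le> x})"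
      by (rule arg_cong[where f = "P.prob"]) auto
    also have "\<dots> = 1 - F x" using P.prob_compl[OF e1] by (simp add: cdf)
    finally have eq: "P.prob {\<omega>\<in>space M. x < X 1 \<omega>} = 1 - F x" .
    have ev: "{\<omega>\<in>space M. \<bar>X 1 \<omega>\<bar> > x} \<in> P.events" by measurable
    have "{\<omega>\<in>space M. x < X 1 \<omega>} \<subseteq> {\<omega>\<in>space M. \<bar>X 1 \<omega>\<bar> > x}" using x by auto
    hence "P.prob {\<omega>\<in>space M. x < X 1 \<omega>} \<le> P.prob {\<omega>\<in>space M. \<bar>X 1 \<omega>\<bar> > x}"
      using ev by (rule P.finite_measure_mono)
    thus ?thesis using tail[OF x] eq by simp
  qed
  have lo_tail: "F (- x) \<le> C * (x / 2) powr (- lam)" if x: "0 < x" for x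
  proof -
    have ev: "{\<omega>\<in>space M. \<bar>X 1 \<omega>\<bar> > x / 2} \<in> P.events" by measurable
    have "{\<omega>\<in>space M. X 1 \<omega> \<le> - x} \<subseteq> {\<omega>\<in>space M. \<bar>X 1 \<omega>\<bar> > x / 2}" using x by auto
    hence "P.prob {\<omega>\<in>space M. X 1 \<omega> \<le> - x} \<le> P.prob {\<omega>\<in>space M. \<bar>X 1 \<omega>\<bar> > x / 2}"
      using ev by (rule P.finite_measure_mono)
    thus ?thesis using tail[of "x / 2"] x cdf[of 1 "- x"] by simp
  qed
  have lam0: "0 < lam" using lam_gt by simp
  have lim0: "((\<lambda>x. x powr (- lam)) \<longlongrightarrow> 0) at_top"
    by (rule tendsto_neg_powr[OF _ filterlim_ident]) (use lam0 in simp)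
  have lim: "((\<lambda>x. C * x powr (- lam)) \<longlongrightarrow> 0) at_top"
    by (rule tendsto_mult_right_zero[OF lim0])
  have small: "\<exists>x>0. C * x powr (- lam) < c" if c: "0 < c" for c
  proof -
    have e1: "\<forall>\<^sub>F x in at_top. C * x powr (- lam) < c" using order_tendstoD(2)[OF lim c] .
    have e2: "\<forall>\<^sub>F x in at_top. (0::real) < x" by (rule eventually_gt_at_top)
    have "\<forall>\<^sub>F x in at_top. 0 < x \<and> C * x powr (- lam) < c" by (rule eventually_conj[OF e2 e1])
    then obtain N where "\<forall>x\<ge>N. 0 < x \<and> C * x powr (- lam) < c" unfolding eventually_at_top_linorder by blast
    thus ?thesis by blast
  qed
  define q where "q = gen_inv F \<beta>"
  have Fq: "F q = \<beta>" unfolding q_def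
  proof (rule gen_inv_eq)
    show "continuous_on UNIV F"
      by (intro continuous_at_imp_continuous_on ballI DERIV_isCont[OF F_deriv])
    obtain x1 where x1: "0 < x1" "C * x1 powr (- lam) < 1 - \<beta>" using small[of "1 - \<beta>"] beta by auto
    show "\<exists>x. \<beta> \<le> F x" using up_tail[OF x1(1)] x1(2) by (intro exI[of _ x1]) simp
    obtain x2 where x2: "0 < x2" "C * x2 powr (- lam) < \<beta>" using small[of \<beta>] beta by auto
    show "\<exists>T. \<forall>x. \<beta> \<le> F x \<longrightarrow> T \<le> x"
    proof (intro exI allI impI)
      fix y assume y: "\<beta> \<le> F y"
      show "- (2 * x2) \<le> y"
      proof (rule ccontr)
        assume "\<not> - (2 * x2) \<le> y"
        hence "F y \<le> F (- (2 * x2))" using Fmono by (simp add: monoD)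
        also have "\<dots> \<le> C * (2 * x2 / 2) powr (- lam)" using x2 by (intro lo_tail) simp
        finally show False using x2 y by simp
      qed
    qed
  qed
  interpret Bh: bah M X F f f' B0 \<beta> q
  proof unfold_locales
    show "P.indep_vars (\<lambda>_. borel) X UNIV" by (rule indep)
    show "\<And>t x. P.prob {\<omega>\<in>space M. X t \<omega> \<le> x} = F x" by (rule cdf)
    show "\<And>x. (F has_real_derivative f x) (at x)" by (rule F_deriv)
    show "\<And>x. (f has_real_derivative f' x) (at x)" by (rule f_deriv)
    show "\<And>x. f x \<le> B0" by (rule fB)
    show "\<And>x. \<bar>f' x\<bar> \<le> B0" by (rule f'B)
    show "0 < \<beta>" "\<beta> < 1" by (rule beta(1), rule beta(2))
    show "F q = \<beta>" by (rule Fq)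
    show "0 < f q" using fq_pos by (simp add: q_def)
  qed
  show ?thesis
  proof (intro allI impI)
    fix \<epsilon> :: real assume \<epsilon>: "0 < \<epsilon>"
    interpret E: bah_eps M X F f f' B0 \<beta> q \<epsilon> by unfold_locales fact
    show "((\<lambda>n. measure M {\<omega> \<in> space M.
            \<bar>bahadur_stat X \<beta> (gen_inv F \<beta>) (f (gen_inv F \<beta>)) n \<omega>\<bar> > \<epsilon>}) \<longlonglongrightarrow> 0)"
    proof -
      define r where "r n = real n powr (1/20)" for n :: nat
      define S where "S n = sqrt (real n)" for n :: nat
      define T where "T n = real n powr (5/18)" for n :: nat
      define Tl where "Tl n = (\<Union>t\<in>{1..n}. {\<omega>\<in>space M. X t \<omega> \<le> - T n} \<union> {\<omega>\<in>space M. T n < X t \<omega>})" for n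
      define Pn where "Pn n = {(i,j). 1 \<le> i \<and> i < j \<and> j \<le> n \<and> r n ^ 4 \<le> E.mm i j}" for n
      define bnd where "bnd n = real n * (C * (T n / 2) powr (- lam) + C * T n powr (- lam))
          + real n ^ 2 * E.W (r n) (S n)" for n
      have f0: "0 < f q" using fq_pos by (simp add: q_def)
      have evc: "\<forall>\<^sub>F n in sequentially. 2 \<le> n \<and> 8 * B0 * (r n)\<^sup>2 \<le> f q ^ 3 * \<epsilon> * S n
          \<and> 2 \<le> r n * f q * Bh.\<delta>0 \<and> r n ^ 4 * (T n + \<bar>q\<bar> + 1 / f q) \<le> \<epsilon> * S n"
      proof -
        have a: "\<forall>\<^sub>F n in sequentially. 2 \<le> n" by (rule eventually_ge_at_top)
        have b: "\<forall>\<^sub>F n in sequentially. 8 * B0 * (r n)\<^sup>2 \<le> f q ^ 3 * \<epsilon> * S n"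
          unfolding r_def S_def by (rule ev_a) (use f0 \<epsilon> in simp)
        have c: "\<forall>\<^sub>F n in sequentially. 2 \<le> r n * f q * Bh.\<delta>0"
          unfolding r_def mult.assoc by (rule ev_b) (use f0 Bh.\<delta>0_pos in simp)
        have d: "\<forall>\<^sub>F n in sequentially. r n ^ 4 * (T n + \<bar>q\<bar> + 1 / f q) \<le> \<epsilon> * S n"
          unfolding r_def S_def T_def add.assoc by (rule ev_c) (use \<epsilon> in simp)
        show ?thesis using a b c d by eventually_elim auto
      qed
      have pb: "\<forall>\<^sub>F n in sequentially. measure M {\<omega> \<in> space M.
            \<bar>bahadur_stat X \<beta> (gen_inv F \<beta>) (f (gen_inv F \<beta>)) n \<omega>\<bar> > \<epsilon>} \<le> bnd n"
        using evc
      proof eventually_elim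
        case (elim n)
        hence n2: "2 \<le> n" and c8: "8 * B0 * (r n)\<^sup>2 \<le> f q ^ 3 * \<epsilon> * S n"
          and c2: "2 \<le> r n * f q * Bh.\<delta>0" and cs: "r n ^ 4 * (T n + \<bar>q\<bar> + 1 / f q) \<le> \<epsilon> * S n" by auto
        have r1: "1 \<le> r n" unfolding r_def using n2 by (intro ge_one_powr_ge_zero) auto
        have Sp: "0 < S n" using n2 by (simp add: S_def)
        have Tp: "0 < T n" using n2 by (simp add: T_def)
        have finP: "finite (Pn n)"
          by (rule finite_subset[of _ "{1..n} \<times> {1..n}"]) (auto simp: Pn_def)
        have Tl_ev: "Tl n \<in> P.events" unfolding Tl_def by measurable
        have Bad_ev: "E.Bad (r n) (S n) i j \<in> P.events" if "(i, j) \<in> Pn n" for i j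
        proof -
          have "E.Kw (r n) (S n) i j \<ge> 0"
            using r1 f0 \<epsilon> Sp E.mm_pos[of i j] by (simp add: E.Kw_def E.A0w_def E.\<delta>w_def)
          hence "E.EG (r n) (S n) i j \<in> P.events"
            unfolding E.EG_def by (intro sets.finite_UN card_int_abs_le(1) E.EGk_ev) auto
          thus ?thesis unfolding E.Bad_def using E.EU_ev E.EC1_ev E.EC2_ev by auto
        qed
        have U_ev: "(\<Union>p\<in>Pn n. E.Bad (r n) (S n) (fst p) (snd p)) \<in> P.events"
          using finP Bad_ev by (intro sets.finite_UN) auto
        have sub: "{\<omega> \<in> space M. \<bar>bahadur_stat X \<beta> (gen_inv F \<beta>) (f (gen_inv F \<beta>)) n \<omega>\<bar> > \<epsilon>}
            \<subseteq> Tl n \<union> (\<Union>p\<in>Pn n. E.Bad (r n) (S n) (fst p) (snd p))"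
        proof
          fix \<omega> assume \<omega>: "\<omega> \<in> {\<omega> \<in> space M. \<bar>bahadur_stat X \<beta> (gen_inv F \<beta>) (f (gen_inv F \<beta>)) n \<omega>\<bar> > \<epsilon>}"
          hence \<omega>s: "\<omega> \<in> space M" and gt: "\<epsilon> < \<bar>bahadur_stat X \<beta> q (f q) n \<omega>\<bar>" by (auto simp: q_def)
          show "\<omega> \<in> Tl n \<union> (\<Union>p\<in>Pn n. E.Bad (r n) (S n) (fst p) (snd p))"
          proof (rule ccontr)
            assume nin: "\<omega> \<notin> Tl n \<union> (\<Union>p\<in>Pn n. E.Bad (r n) (S n) (fst p) (snd p))"
            have notTl: "- T n < X t \<omega> \<and> X t \<omega> \<le> T n" if "t \<in> {1..n}" for t
            proof -
              have "\<omega> \<notin> {\<omega>\<in>space M. X t \<omega> \<le> - T n} \<union> {\<omega>\<in>space M. T n < X t \<omega>}"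
                using nin that unfolding Tl_def by blast
              thus ?thesis using \<omega>s by auto
            qed
            have notBad: "\<omega> \<notin> E.Bad (r n) (S n) i j"
              if "1 \<le> i" "i < j" "j \<le> n" "r n ^ 4 \<le> E.mm i j" for i j
            proof -
              have "(i, j) \<in> Pn n" using that by (simp add: Pn_def)
              thus ?thesis using nin by force
            qed
            have "\<bar>bahadur_stat X \<beta> q (f q) n \<omega>\<bar> \<le> \<epsilon>"
              by (rule E.stat_bound[OF \<omega>s n2 r1 S_def c8 c2 _ cs notTl notBad]) (use Tp in auto)
            with gt show False by simp
          qed
        qed
        have "measure M {\<omega> \<in> space M. \<bar>bahadur_stat X \<beta> (gen_inv F \<beta>) (f (gen_inv F \<beta>)) n \<omega>\<bar> > \<epsilon>}
            \<le> P.prob (Tl n \<union> (\<Union>p\<in>Pn n. E.Bad (r n) (S n) (fst p) (snd p)))"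
          by (rule P.prob_mono_any[OF sub]) (use Tl_ev U_ev in auto)
        also have "\<dots> \<le> P.prob (Tl n) + P.prob (\<Union>p\<in>Pn n. E.Bad (r n) (S n) (fst p) (snd p))"
          by (rule measure_Un_le[OF Tl_ev U_ev])
        also have "P.prob (Tl n) \<le> real (card {1..n}) * (C * (T n / 2) powr (- lam) + C * T n powr (- lam))"
          unfolding Tl_def
        proof (rule P.union_bound)
          fix t assume t: "t \<in> {1..n}"
          show "{\<omega>\<in>space M. X t \<omega> \<le> - T n} \<union> {\<omega>\<in>space M. T n < X t \<omega>} \<in> P.events" by measurable
          have e1: "{\<omega>\<in>space M. X t \<omega> \<le> T n} \<in> P.events" by measurable
          have "P.prob {\<omega>\<in>space M. T n < X t \<omega>} = P.prob (space M - {\<omega>\<in>space M. X t \<omega> \<le> T n})"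
            by (rule arg_cong[where f = "P.prob"]) auto
          also have "\<dots> = 1 - F (T n)" using P.prob_compl[OF e1] by (simp add: cdf)
          finally have hi: "P.prob {\<omega>\<in>space M. T n < X t \<omega>} \<le> C * T n powr (- lam)"
            using up_tail[OF Tp] by simp
          have lo: "P.prob {\<omega>\<in>space M. X t \<omega> \<le> - T n} \<le> C * (T n / 2) powr (- lam)"
            using lo_tail[OF Tp] cdf[of t "- T n"] by simp
          have "P.prob ({\<omega>\<in>space M. X t \<omega> \<le> - T n} \<union> {\<omega>\<in>space M. T n < X t \<omega>})
              \<le> P.prob {\<omega>\<in>space M. X t \<omega> \<le> - T n} + P.prob {\<omega>\<in>space M. T n < X t \<omega>}"
            by (rule measure_Un_le) measurable
          thus "P.prob ({\<omega>\<in>space M. X t \<omega> \<le> - T n} \<union> {\<omega>\<in>space M. T n < X t \<omega>})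
              \<le> C * (T n / 2) powr (- lam) + C * T n powr (- lam)" using hi lo by linarith
        qed simp
        also have "P.prob (\<Union>p\<in>Pn n. E.Bad (r n) (S n) (fst p) (snd p)) \<le> real (card (Pn n)) * E.W (r n) (S n)"
        proof (rule P.union_bound[OF finP])
          fix p assume p: "p \<in> Pn n"
          obtain i j where pij: "p = (i, j)" by (cases p)
          have ij: "1 \<le> i" "i < j" "j \<le> n" "r n ^ 4 \<le> E.mm i j" using p by (auto simp: Pn_def pij)
          show "E.Bad (r n) (S n) (fst p) (snd p) \<in> P.events" using Bad_ev p by (simp add: pij)
          have mS: "E.mm i j \<le> (S n)\<^sup>2" using ij by (simp add: E.mm_def S_def)
          show "P.prob (E.Bad (r n) (S n) (fst p) (snd p)) \<le> E.W (r n) (S n)"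
            unfolding pij fst_conv snd_conv by (rule E.Bad_prob[OF _ r1 ij(4) mS Sp]) (use ij in simp)
        qed
        also have "real (card (Pn n)) * E.W (r n) (S n) \<le> real n ^ 2 * E.W (r n) (S n)"
        proof (rule mult_right_mono)
          have "card (Pn n) \<le> card ({1..n} \<times> {1..n})" by (rule card_mono) (auto simp: Pn_def)
          hence "card (Pn n) \<le> n * n" by simp
          hence "real (card (Pn n)) \<le> real (n * n)" by (simp only: of_nat_le_iff)
          thus "real (card (Pn n)) \<le> real n ^ 2" by (simp add: power2_eq_square)
          show "0 \<le> E.W (r n) (S n)"
            using r1 f0 \<epsilon> unfolding E.W_def by (intro add_nonneg_nonneg mult_nonneg_nonneg) auto
        qed
        finally show ?case by (simp add: bnd_def)
      qed
      have bl: "bnd \<longlonglongrightarrow> 0"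
      proof -
        have t1: "(\<lambda>n. real n * (C * (T n / 2) powr (- lam) + C * T n powr (- lam))) \<longlonglongrightarrow> 0"
          unfolding T_def by (rule asym_tail[OF lam_gt])
        have t2: "(\<lambda>n. real n ^ 2 * E.W (r n) (S n)) \<longlonglongrightarrow> 0"
          unfolding E.W_def r_def S_def
          by (rule asym_main) (use Bh.\<rho>_pos f0 \<epsilon> E.\<kappa>_pos E.c3_pos in simp_all)
        show ?thesis unfolding bnd_def using tendsto_add_zero[OF t1 t2] by simp
      qed
      show ?thesis
        by (rule tendsto_sandwich[OF _ pb tendsto_const bl]) simp
    qed
  qed
qed

end
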